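(* Let $\mathfrak{A}$ be a unital $C^*$-algebra, $\theta,\alpha\in\mathrm{Aut}(\mathfrak{A})$, $u\in\mathfrak{A}$ unitary with $u\,\alpha(\theta(a))=\theta(\alpha(a))u$ for all $a$, $\omega_o$ a $\theta$-invariant state on $\mathfrak{A}$ and $\omega:=\omega_o\circ E$. Identify $(\mathcal{H}_{\omega_o},\pi_{\omega_o},V_{\omega_o,\theta},\xi_{\omega_o})$ with the restriction of $(\mathcal{H}_\omega,\pi_\omega|_{\mathfrak{A}},V_{\omega,\Phi_{\theta,u}},\xi_\omega)$ to the reducing subspace $\overline{\pi_\omega(\mathfrak{A})\xi_\omega}$. The following are equivalent: (i) $E_1^{V_{\omega_o,\theta}}=E_1^{V_{\omega,\Phi_{\theta,u}}}$; (ii) for each $n\ne0$, the equation $\pi_{\omega_o}(\alpha^{-n}(u_n))V_{\omega_o,\theta}\eta=\eta$ has no nonzero solution $\eta\in\mathcal{H}_{\omega_o}$. Consequently, if $\omega_o$ is weakly clustering for $\theta$, then $\omega$ is weakly clustering for $\Phi_{\theta,u}$ if and only if (ii) holds.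
   Context: $\mathfrak{A}\rtimes_\alpha\mathbb{Z}$ is generated by $\mathfrak{A}$ and a unitary $V$ with $VaV^*=\alpha(a)$; $E$ is the canonical conditional expectation onto $\mathfrak{A}$ ($E(aV^n)=\delta_{n,0}a$); $\Phi_{\theta,u}$ is the automorphism with $\Phi_{\theta,u}(a)=\theta(a)$, $\Phi_{\theta,u}(V)=uV$; $\omega$ is $\Phi_{\theta,u}$-invariant. The unitaries $u_n$: $u_0=I$, $u_n=u\alpha(u)\cdots\alpha^{n-1}(u)$ ($n\ge1$), $u_n=\alpha^{-1}(u^* )\cdots\alpha^{n}(u^* )$ ($n<0$). For an automorphism $\beta$ of $\mathfrak{B}$ and $\beta$-invariant state $\varphi$, the covariant GNS representation $(\mathcal{H}_\varphi,\pi_\varphi,V_{\varphi,\beta},\xi_\varphi)$ has $V_{\varphi,\beta}$ the unitary with $V_{\varphi,\beta}\xi_\varphi=\xi_\varphi$ and $V_{\varphi,\beta}\pi_\varphi(b)\xi_\varphi=\pi_\varphi(\beta(b))\xi_\varphi$. For an operator $T$, $E_1^T$ is the orthogonal projection onto $\{\eta\mid T\eta=\eta\}$. $\varphi$ is weakly clustering if $\frac1n\sum_{k=0}^{n-1}\varphi(a\beta^k(b))\to\varphi(a)\varphi(b)$ for all $a,b$; equivalently $\dim E_1^{V_{\varphi,\beta}}=1$. *)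

theory Defs
  imports "HOL-Analysis.Analysis"
begin

class complex_vector = real_vector +
  fixes scaleC :: "complex \<Rightarrow> 'a \<Rightarrow> 'a"
  assumes scaleC_add_right: "scaleC c (x + y) = scaleC c x + scaleC c y"
    and scaleC_add_left: "scaleC (c + d) x = scaleC c x + scaleC d x"
    and scaleC_scaleC: "scaleC c (scaleC d x) = scaleC (c * d) x"
    and scaleC_one: "scaleC 1 x = x"
    and scaleR_scaleC: "scaleR r x = scaleC (complex_of_real r) x"

class complex_normed_vector = complex_vector + real_normed_vector +
  assumes norm_scaleC: "norm (scaleC c x) = cmod c * norm x"

class complex_inner = complex_normed_vector +
  fixes cinner :: "'a \<Rightarrow> 'a \<Rightarrow> complex"
  assumes cinner_commute: "cinner x y = cnj (cinner y x)"
    and cinner_add_left: "cinner (x + y) z = cinner x z + cinner y z"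
    and cinner_scaleC_left: "cinner (scaleC c x) y = cnj c * cinner x y"
    and cinner_self_real: "Im (cinner x x) = 0"
    and norm_eq_sqrt_cinner: "norm x = sqrt (Re (cinner x x))"

class chilbert = complex_inner + complete_space

class cstar_algebra = complex_normed_vector + real_normed_algebra_1 + complete_space +
  fixes adj :: "'a \<Rightarrow> 'a"
  assumes adj_adj: "adj (adj x) = x"
    and adj_add: "adj (x + y) = adj x + adj y"
    and adj_mult: "adj (x * y) = adj y * adj x"
    and adj_scaleC: "adj (scaleC c x) = scaleC (cnj c) (adj x)"
    and mult_scaleC_left: "scaleC c x * y = scaleC c (x * y)"
    and mult_scaleC_right: "x * scaleC c y = scaleC c (x * y)"
    and cstar_identity: "norm (adj x * x) = (norm x)\<^sup>2"

definition clinear :: "('a::complex_vector \<Rightarrow> 'b::complex_vector) \<Rightarrow> bool" where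
  "clinear f \<longleftrightarrow> (\<forall>x y. f (x + y) = f x + f y) \<and> (\<forall>c x. f (scaleC c x) = scaleC c (f x))"

definition clinear_functional :: "('a::complex_vector \<Rightarrow> complex) \<Rightarrow> bool" where
  "clinear_functional f \<longleftrightarrow> (\<forall>x y. f (x + y) = f x + f y) \<and> (\<forall>c x. f (scaleC c x) = c * f x)"

definition star_hom :: "('a::cstar_algebra \<Rightarrow> 'b::cstar_algebra) \<Rightarrow> bool" where
  "star_hom f \<longleftrightarrow> clinear f \<and> (\<forall>x y. f (x * y) = f x * f y) \<and> (\<forall>x. f (adj x) = adj (f x)) \<and> f 1 = 1"

definition star_aut :: "('a::cstar_algebra \<Rightarrow> 'a) \<Rightarrow> bool" where
  "star_aut f \<longleftrightarrow> star_hom f \<and> bij f"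

definition unitary :: "'a::cstar_algebra \<Rightarrow> bool" where
  "unitary u \<longleftrightarrow> adj u * u = 1 \<and> u * adj u = 1"

definition positive :: "'a::cstar_algebra \<Rightarrow> bool" where
  "positive x \<longleftrightarrow> (\<exists>y. x = adj y * y)"

definition is_state :: "('a::cstar_algebra \<Rightarrow> complex) \<Rightarrow> bool" where
  "is_state \<phi> \<longleftrightarrow> clinear_functional \<phi> \<and>
     (\<forall>a. Im (\<phi> (adj a * a)) = 0 \<and> 0 \<le> Re (\<phi> (adj a * a))) \<and> \<phi> 1 = 1"

definition invariant_state :: "('a::cstar_algebra \<Rightarrow> complex) \<Rightarrow> ('a \<Rightarrow> 'a) \<Rightarrow> bool" where
  "invariant_state \<phi> \<beta> \<longleftrightarrow> is_state \<phi> \<and> (\<forall>a. \<phi> (\<beta> a) = \<phi> a)"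

definition weakly_clustering :: "('a::cstar_algebra \<Rightarrow> complex) \<Rightarrow> ('a \<Rightarrow> 'a) \<Rightarrow> bool" where
  "weakly_clustering \<phi> \<beta> \<longleftrightarrow>
     (\<forall>a b. (\<lambda>n. (\<Sum>k<n. \<phi> (a * (\<beta> ^^ k) b)) / of_nat n) \<longlonglongrightarrow> \<phi> a * \<phi> b)"

definition upow :: "'a::cstar_algebra \<Rightarrow> int \<Rightarrow> 'a" where
  "upow v n = (if 0 \<le> n then v ^ nat n else adj v ^ nat (- n))"

definition aut_pow :: "('a \<Rightarrow> 'a) \<Rightarrow> int \<Rightarrow> 'a \<Rightarrow> 'a" where
  "aut_pow \<alpha> n = (if 0 \<le> n then \<alpha> ^^ nat n else inv \<alpha> ^^ nat (- n))"

text \<open>u_n = u alpha(u) ... alpha^(n-1)(u) for n \<ge> 1 and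
  u_n = alpha^(-1)(u*) ... alpha^n(u*) for n < 0; u_0 = 1.\<close>
fun useq_pos :: "('a::cstar_algebra \<Rightarrow> 'a) \<Rightarrow> 'a \<Rightarrow> nat \<Rightarrow> 'a" where
  "useq_pos \<alpha> u 0 = 1"
| "useq_pos \<alpha> u (Suc k) = useq_pos \<alpha> u k * (\<alpha> ^^ k) u"

fun useq_neg :: "('a::cstar_algebra \<Rightarrow> 'a) \<Rightarrow> 'a \<Rightarrow> nat \<Rightarrow> 'a" where
  "useq_neg \<alpha> u 0 = 1"
| "useq_neg \<alpha> u (Suc k) = useq_neg \<alpha> u k * (inv \<alpha> ^^ Suc k) (adj u)"

definition useq :: "('a::cstar_algebra \<Rightarrow> 'a) \<Rightarrow> 'a \<Rightarrow> int \<Rightarrow> 'a" where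
  "useq \<alpha> u n = (if 0 \<le> n then useq_pos \<alpha> u (nat n) else useq_neg \<alpha> u (nat (- n)))"

text \<open>'b together with iota (embedding of A), the unitary V and the conditional
  expectation E is (isomorphic to) the crossed product A \<rtimes>_alpha Z: iota is an injective
  unital *-homomorphism, V is a unitary implementing alpha, the polynomials
  sum iota(a_n) V^n are dense, and E is a continuous linear positive faithful map with
  E(iota(a) V^n) = delta_{n,0} a.  (Existence of such a faithful expectation identifies
  the generated C*-algebra with the reduced = full crossed product.)\<close>
definition crossed_product ::
  "('a::cstar_algebra \<Rightarrow> 'a) \<Rightarrow> ('a \<Rightarrow> 'b::cstar_algebra) \<Rightarrow> 'b \<Rightarrow> ('b \<Rightarrow> 'a) \<Rightarrow> bool" where
  "crossed_product \<alpha> \<iota> V E \<longleftrightarrow>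
     star_aut \<alpha> \<and> star_hom \<iota> \<and> inj \<iota> \<and> unitary V \<and>
     (\<forall>a. V * \<iota> a * adj V = \<iota> (\<alpha> a)) \<and>
     closure {\<Sum>n\<in>F. \<iota> (f n) * upow V n | F f. finite F} = UNIV \<and>
     clinear E \<and> continuous_on UNIV E \<and>
     (\<forall>a n. E (\<iota> a * upow V n) = (if n = 0 then a else 0)) \<and>
     (\<forall>b. positive (E (adj b * b))) \<and>
     (\<forall>b. E (adj b * b) = 0 \<longrightarrow> b = 0)"

definition bounded_clinear_op :: "('h::complex_normed_vector \<Rightarrow> 'h) \<Rightarrow> bool" where
  "bounded_clinear_op T \<longleftrightarrow> clinear T \<and> (\<exists>K. \<forall>x. norm (T x) \<le> K * norm x)"

definition unitary_op :: "('h::chilbert \<Rightarrow> 'h) \<Rightarrow> bool" where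
  "unitary_op W \<longleftrightarrow> bounded_clinear_op W \<and> bij W \<and> (\<forall>x y. cinner (W x) (W y) = cinner x y)"

definition representation :: "('b::cstar_algebra \<Rightarrow> 'h::chilbert \<Rightarrow> 'h) \<Rightarrow> bool" where
  "representation \<pi> \<longleftrightarrow>
     (\<forall>b. bounded_clinear_op (\<pi> b)) \<and>
     (\<forall>b c. \<pi> (b + c) = (\<lambda>x. \<pi> b x + \<pi> c x)) \<and>
     (\<forall>z b. \<pi> (scaleC z b) = (\<lambda>x. scaleC z (\<pi> b x))) \<and>
     (\<forall>b c. \<pi> (b * c) = \<pi> b \<circ> \<pi> c) \<and> \<pi> 1 = id \<and>
     (\<forall>b x y. cinner (\<pi> (adj b) x) y = cinner x (\<pi> b y))"

text \<open>(H, pi, W, xi) is the covariant GNS representation of the beta-invariant state phi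
  (unique up to unitary equivalence).\<close>
definition covariant_GNS ::
  "('b::cstar_algebra \<Rightarrow> complex) \<Rightarrow> ('b \<Rightarrow> 'b) \<Rightarrow> ('b \<Rightarrow> 'h::chilbert \<Rightarrow> 'h) \<Rightarrow> ('h \<Rightarrow> 'h) \<Rightarrow> 'h \<Rightarrow> bool" where
  "covariant_GNS \<phi> \<beta> \<pi> W \<xi> \<longleftrightarrow>
     representation \<pi> \<and> (\<forall>b. cinner \<xi> (\<pi> b \<xi>) = \<phi> b) \<and>
     closure (range (\<lambda>b. \<pi> b \<xi>)) = UNIV \<and>
     unitary_op W \<and> W \<xi> = \<xi> \<and> (\<forall>b. W (\<pi> b \<xi>) = \<pi> (\<beta> b) \<xi>)"

definition orth_proj :: "'h::chilbert set \<Rightarrow> 'h \<Rightarrow> 'h" where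
  "orth_proj S x = (THE p. p \<in> S \<and> (\<forall>s\<in>S. cinner s (x - p) = 0))"

definition E1 :: "('h::chilbert \<Rightarrow> 'h) \<Rightarrow> 'h \<Rightarrow> 'h" where
  "E1 T = orth_proj {\<eta>. T \<eta> = \<eta>}"

text \<open>E_1 of the restriction of T to an invariant closed subspace K, viewed as an operator
  on the whole space (zero on the orthogonal complement of K).\<close>
definition E1_on :: "'h::chilbert set \<Rightarrow> ('h \<Rightarrow> 'h) \<Rightarrow> 'h \<Rightarrow> 'h" where
  "E1_on K T = orth_proj {\<eta>\<in>K. T \<eta> = \<eta>}"

end

theory Submission
  imports Defs
begin


lemma scaleC_zero_right[simp]: "scaleC c (0::'a::complex_vector) = 0"
  by (metis add_cancel_right_right scaleC_add_right)
lemma scaleC_zero_left[simp]: "scaleC 0 (x::'a::complex_vector) = 0"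
  by (metis add_0 add_cancel_right_right scaleC_add_left)
lemma scaleC_minus_right: "scaleC c (- x::'a::complex_vector) = - scaleC c x"
  by (metis add.right_inverse eq_neg_iff_add_eq_0 scaleC_add_right scaleC_zero_right)
lemma scaleC_diff_right: "scaleC c (x - y::'a::complex_vector) = scaleC c x - scaleC c y"
  by (metis diff_conv_add_uminus scaleC_add_right scaleC_minus_right)
lemma scaleC_minus_left: "scaleC (- c) (x::'a::complex_vector) = - scaleC c x"
  by (metis add.right_inverse eq_neg_iff_add_eq_0 scaleC_add_left scaleC_zero_left)
lemma scaleC_diff_left: "scaleC (c - d) (x::'a::complex_vector) = scaleC c x - scaleC d x"
  by (metis diff_conv_add_uminus scaleC_add_left scaleC_minus_left)
lemma scaleC_sum_right: "scaleC c (sum f A) = (\<Sum>i\<in>A. scaleC c (f i::'a::complex_vector))"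
  by (induction A rule: infinite_finite_induct) (auto simp: scaleC_add_right)

lemma cinner_add_right: "cinner x (y + z) = cinner x y + cinner (x::'a::complex_inner) z"
proof -
  have "cinner x (y + z) = cnj (cinner (y + z) x)" by (rule cinner_commute)
  also have "\<dots> = cnj (cinner y x) + cnj (cinner z x)" by (simp add: cinner_add_left)
  also have "cnj (cinner y x) = cinner x y" by (simp add: cinner_commute[of x y])
  also have "cnj (cinner z x) = cinner x z" by (simp add: cinner_commute[of x z])
  finally show ?thesis .
qed
lemma cinner_scaleC_right: "cinner x (scaleC c y) = c * cinner (x::'a::complex_inner) y"
proof -
  have "cinner x (scaleC c y) = cnj (cinner (scaleC c y) x)" by (rule cinner_commute)
  also have "\<dots> = c * cnj (cinner y x)" by (simp add: cinner_scaleC_left)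
  also have "cnj (cinner y x) = cinner x y" by (simp add: cinner_commute[of x y])
  finally show ?thesis .
qed
lemma cinner_zero_left[simp]: "cinner 0 (x::'a::complex_inner) = 0"
proof -
  have "cinner (0+0) x = cinner 0 x + cinner 0 x" by (rule cinner_add_left)
  thus ?thesis by simp
qed
lemma cinner_zero_right[simp]: "cinner (x::'a::complex_inner) 0 = 0"
proof -
  have "cinner x (0+0) = cinner x 0 + cinner x 0" by (rule cinner_add_right)
  thus ?thesis by simp
qed
lemma cinner_minus_left: "cinner (- x) (y::'a::complex_inner) = - cinner x y"
proof -
  have "cinner (x + - x) y = cinner x y + cinner (-x) y" by (rule cinner_add_left)
  thus ?thesis by (simp add: eq_neg_iff_add_eq_0 add.commute)
qed
lemma cinner_minus_right: "cinner x (- y::'a::complex_inner) = - cinner x y"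
proof -
  have "cinner x (y + - y) = cinner x y + cinner x (-y)" by (rule cinner_add_right)
  thus ?thesis by (simp add: eq_neg_iff_add_eq_0 add.commute)
qed
lemma cinner_diff_left: "cinner (x - y) (z::'a::complex_inner) = cinner x z - cinner y z"
  by (simp only: diff_conv_add_uminus cinner_add_left cinner_minus_left)
lemma cinner_diff_right: "cinner x (y - z::'a::complex_inner) = cinner x y - cinner x z"
  by (simp only: diff_conv_add_uminus cinner_add_right cinner_minus_right)
lemma cinner_sum_right: "cinner x (sum f A) = (\<Sum>i\<in>A. cinner (x::'a::complex_inner) (f i))"
  by (induction A rule: infinite_finite_induct) (auto simp: cinner_add_right)
lemma cinner_sum_left: "cinner (sum f A) x = (\<Sum>i\<in>A. cinner (f i) (x::'a::complex_inner))"
  by (induction A rule: infinite_finite_induct) (auto simp: cinner_add_left)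

lemma cinner_self_Re_nonneg: "0 \<le> Re (cinner x (x::'a::complex_inner))"
proof -
  have "0 \<le> sqrt (Re (cinner x x))" using norm_eq_sqrt_cinner[of x] by (metis norm_ge_zero)
  thus ?thesis by (metis real_sqrt_ge_0_iff)
qed

lemma cinner_self: "cinner x (x::'a::complex_inner) = complex_of_real ((norm x)\<^sup>2)"
proof -
  have "(norm x)\<^sup>2 = Re (cinner x x)" using norm_eq_sqrt_cinner[of x] cinner_self_Re_nonneg[of x] by simp
  thus ?thesis using cinner_self_real[of x] by (simp add: complex_eq_iff)
qed

lemma cinner_self_eq_0[simp]: "cinner x x = 0 \<longleftrightarrow> x = (0::'a::complex_inner)"
  by (simp add: cinner_self)

lemma cinner_scaleR_left: "cinner (scaleR r x) (y::'a::complex_inner) = of_real r * cinner x y"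
  by (simp add: scaleR_scaleC cinner_scaleC_left)
lemma cinner_scaleR_right: "cinner x (scaleR r y::'a::complex_inner) = of_real r * cinner x y"
  by (simp add: scaleR_scaleC cinner_scaleC_right)

lemma Cauchy_Schwarz_c: "cmod (cinner x y) \<le> norm x * norm (y::'a::complex_inner)"
proof (cases "y = 0")
  case True thus ?thesis by simp
next
  case False
  define N where "N = (norm y)\<^sup>2"
  have N: "N > 0" using False by (simp add: N_def)
  define c where "c = cinner y x"
  define t where "t = c / of_real N"
  have e: "cinner (x - scaleC t y) (x - scaleC t y) = of_real ((norm x)\<^sup>2) - of_real ((cmod c)\<^sup>2 / N)"
  proof -
    have "cinner (x - scaleC t y) (x - scaleC t y) =
       cinner x x - t * cinner x y - cnj t * cinner y x + cnj t * t * cinner y y"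
      by (simp add: cinner_diff_left cinner_diff_right cinner_scaleC_left cinner_scaleC_right algebra_simps)
    also have "cinner x y = cnj c" by (simp add: c_def cinner_commute[of x y])
    also have "cinner y y = of_real N" by (simp add: N_def cinner_self)
    also have "cinner x x = of_real ((norm x)\<^sup>2)" by (simp add: cinner_self)
    finally have "cinner (x - scaleC t y) (x - scaleC t y) =
       of_real ((norm x)\<^sup>2) - t * cnj c - cnj t * c + cnj t * t * of_real N" by (simp add: c_def)
    moreover have cc: "c * cnj c = of_real ((cmod c)\<^sup>2)" by (rule complex_norm_square[symmetric])
    moreover have "t * cnj c = of_real ((cmod c)\<^sup>2 / N)" unfolding t_def using cc by simp
    moreover have "cnj t * c = of_real ((cmod c)\<^sup>2 / N)" unfolding t_def using cc
      by (simp add: mult.commute)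
    moreover have "cnj t * t * of_real N = of_real ((cmod c)\<^sup>2 / N)" unfolding t_def using cc N
      by (simp add: field_simps)
    ultimately show ?thesis by simp
  qed
  have "0 \<le> Re (cinner (x - scaleC t y) (x - scaleC t y))" by (rule cinner_self_Re_nonneg)
  hence "(cmod c)\<^sup>2 / N \<le> (norm x)\<^sup>2" by (simp add: e)
  hence "(cmod c)\<^sup>2 \<le> (norm x)\<^sup>2 * N" using N by (simp add: field_simps)
  hence "(cmod c)\<^sup>2 \<le> (norm x * norm y)\<^sup>2" by (simp add: N_def power_mult_distrib)
  hence "cmod c \<le> norm x * norm y" by (simp add: power2_le_iff_abs_le)
  thus ?thesis by (metis c_def cinner_commute complex_mod_cnj)
qed

lemma bounded_bilinear_cinner: "bounded_bilinear (cinner :: 'a::complex_inner \<Rightarrow> 'a \<Rightarrow> complex)"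
proof
  fix a a' b b' :: 'a and r :: real
  show "cinner (a + a') b = cinner a b + cinner a' b" by (rule cinner_add_left)
  show "cinner a (b + b') = cinner a b + cinner a b'" by (rule cinner_add_right)
  show "cinner (scaleR r a) b = scaleR r (cinner a b)" by (simp add: cinner_scaleR_left scaleR_conv_of_real)
  show "cinner a (scaleR r b) = scaleR r (cinner a b)" by (simp add: cinner_scaleR_right scaleR_conv_of_real)
next
  show "\<exists>K. \<forall>a b. norm (cinner (a::'a) b) \<le> norm a * norm b * K"
    by (rule exI[of _ 1]) (simp add: Cauchy_Schwarz_c)
qed

lemmas tendsto_cinner = bounded_bilinear.tendsto[OF bounded_bilinear_cinner]

lemma bounded_bilinear_scaleC: "bounded_bilinear (scaleC :: complex \<Rightarrow> 'a::complex_normed_vector \<Rightarrow> 'a)"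
proof
  fix a a' :: complex and b b' :: 'a and r :: real
  show "scaleC (a + a') b = scaleC a b + scaleC a' b" by (rule scaleC_add_left)
  show "scaleC a (b + b') = scaleC a b + scaleC a b'" by (rule scaleC_add_right)
  show "scaleC (scaleR r a) b = scaleR r (scaleC a b)" by (simp add: scaleR_scaleC scaleC_scaleC scaleR_conv_of_real)
  show "scaleC a (scaleR r b) = scaleR r (scaleC a b)" by (simp add: scaleR_scaleC scaleC_scaleC mult.commute)
next
  show "\<exists>K. \<forall>a b. norm (scaleC a (b::'a)) \<le> norm a * norm b * K"
    by (rule exI[of _ 1]) (simp add: norm_scaleC)
qed

lemmas tendsto_scaleC = bounded_bilinear.tendsto[OF bounded_bilinear_scaleC]

lemma clinear_linear: "clinear f \<Longrightarrow> linear f"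
  unfolding clinear_def by (auto intro!: linearI simp: scaleR_scaleC)

lemma bounded_clinear_op_bl: "bounded_clinear_op T \<Longrightarrow> bounded_linear T"
proof -
  assume a: "bounded_clinear_op T"
  then obtain K where K: "\<And>x. norm (T x) \<le> K * norm x" and l: "clinear T"
    unfolding bounded_clinear_op_def by blast
  have lin: "linear T" using l by (rule clinear_linear)
  show ?thesis
  proof (rule bounded_linear_intro[where K=K])
    fix x y show "T (x + y) = T x + T y" using lin by (simp add: linear_add)
    fix r show "T (scaleR r x) = scaleR r (T x)" using lin by (simp add: linear_scale)
  qed (simp add: K mult.commute)
qed



definition csub :: "'a::complex_vector set \<Rightarrow> bool" where
  "csub S \<longleftrightarrow> 0 \<in> S \<and> (\<forall>x\<in>S. \<forall>y\<in>S. x + y \<in> S) \<and> (\<forall>c. \<forall>x\<in>S. scaleC c x \<in> S)"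

lemma csub_diff: "csub S \<Longrightarrow> x \<in> S \<Longrightarrow> y \<in> S \<Longrightarrow> x - y \<in> S"
  unfolding csub_def
  by (metis diff_conv_add_uminus scaleC_minus_left scaleC_one)

lemma csub_closure: "csub S \<Longrightarrow> csub (closure (S::'a::complex_normed_vector set))"
proof -
  assume S: "csub S"
  show ?thesis unfolding csub_def
  proof (intro conjI ballI allI)
    show "0 \<in> closure S" using S closure_subset unfolding csub_def by blast
  next
    fix x y assume "x \<in> closure S" "y \<in> closure S"
    then obtain f g where f: "\<forall>n. f n \<in> S" "f \<longlonglongrightarrow> x" and g: "\<forall>n. g n \<in> S" "g \<longlonglongrightarrow> y"
      unfolding closure_sequential by blast
    have "\<forall>n. f n + g n \<in> S" using f g S unfolding csub_def by blast
    moreover have "(\<lambda>n. f n + g n) \<longlonglongrightarrow> x + y" using f g by (intro tendsto_add) auto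
    ultimately show "x + y \<in> closure S" unfolding closure_sequential
      by (intro exI[where x="\<lambda>n. f n + g n"]) simp
  next
    fix c x assume "x \<in> closure S"
    then obtain f where f: "\<forall>n. f n \<in> S" "f \<longlonglongrightarrow> x"
      unfolding closure_sequential by blast
    have "\<forall>n. scaleC c (f n) \<in> S" using f S unfolding csub_def by blast
    moreover have "(\<lambda>n. scaleC c (f n)) \<longlonglongrightarrow> scaleC c x" using f by (intro tendsto_scaleC) auto
    ultimately show "scaleC c x \<in> closure S" unfolding closure_sequential
      by (intro exI[where x="\<lambda>n. scaleC c (f n)"]) simp
  qed
qed

lemma norm_sq_cinner: "(norm x)\<^sup>2 = Re (cinner x (x::'a::complex_inner))"
  by (simp add: cinner_self)

lemma parallelogram_c:
  "(norm (a + b))\<^sup>2 + (norm (a - b))\<^sup>2 = 2 * (norm a)\<^sup>2 + 2 * (norm (b::'a::complex_inner))\<^sup>2"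
  unfolding norm_sq_cinner
  by (simp add: cinner_add_left cinner_add_right cinner_diff_left cinner_diff_right)

lemma projection_exists:
  fixes S :: "'a::chilbert set"
  assumes S: "csub S" and cl: "closed S"
  shows "\<exists>p\<in>S. \<forall>s\<in>S. cinner s (x - p) = 0"
proof -
  define D where "D = (\<lambda>s. norm (x - s)) ` S"
  define d where "d = Inf D"
  have D0: "D \<noteq> {}" using S unfolding D_def csub_def by blast
  have Db: "bdd_below D" unfolding D_def by (rule bdd_belowI[of _ 0]) auto
  have dle: "\<And>s. s \<in> S \<Longrightarrow> d \<le> norm (x - s)"
    unfolding d_def D_def by (rule cInf_lower) (use Db D_def in auto)
  have d0: "0 \<le> d" unfolding d_def using D0 by (intro cInf_greatest) (auto simp: D_def)
  have "\<forall>n. \<exists>s\<in>S. (norm (x - s))\<^sup>2 < d\<^sup>2 + 1 / (real n + 1)"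
  proof
    fix n :: nat
    have "d < sqrt (d\<^sup>2 + 1 / (real n + 1))"
      by (rule real_less_rsqrt) (simp add: add_pos_nonneg)
    then obtain t where "t \<in> D" "t < sqrt (d\<^sup>2 + 1 / (real n + 1))"
      using cInf_lessD[OF D0] unfolding d_def by blast
    then obtain s where s: "s \<in> S" "norm (x - s) < sqrt (d\<^sup>2 + 1 / (real n + 1))"
      unfolding D_def by blast
    hence "(norm (x - s))\<^sup>2 < (sqrt (d\<^sup>2 + 1 / (real n + 1)))\<^sup>2"
      by (intro power_strict_mono) auto
    hence "(norm (x - s))\<^sup>2 < d\<^sup>2 + 1 / (real n + 1)"
      by (simp add: add_nonneg_nonneg)
    thus "\<exists>s\<in>S. (norm (x - s))\<^sup>2 < d\<^sup>2 + 1 / (real n + 1)" using s by blast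
  qed
  then obtain s where sS: "\<And>n. s n \<in> S" and sd: "\<And>n. (norm (x - s n))\<^sup>2 < d\<^sup>2 + 1 / (real n + 1)"
    by metis
  have half: "\<And>a b. a \<in> S \<Longrightarrow> b \<in> S \<Longrightarrow> scaleR (1/2) (a + b) \<in> S"
    using S unfolding csub_def scaleR_scaleC by blast
  have cs: "(norm (s m - s n))\<^sup>2 \<le> 2 / (real m + 1) + 2 / (real n + 1)" for m n
  proof -
    have "norm ((x - s m) + (x - s n)) = 2 * norm (x - scaleR (1/2) (s m + s n))"
    proof -
      have "(x - s m) + (x - s n) = scaleR 2 (x - scaleR (1/2) (s m + s n))"
        by (simp add: algebra_simps scaleR_2)
      thus ?thesis by simp
    qed
    moreover have "d \<le> norm (x - scaleR (1/2) (s m + s n))" using half sS dle by blast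
    ultimately have "2 * d \<le> norm ((x - s m) + (x - s n))" by simp
    hence "(2 * d)\<^sup>2 \<le> (norm ((x - s m) + (x - s n)))\<^sup>2" using d0 by (intro power_mono) auto
    moreover have "(x - s m) - (x - s n) = s n - s m" by simp
    moreover note parallelogram_c[of "x - s m" "x - s n"] sd[of m] sd[of n]
    ultimately have "(norm (s n - s m))\<^sup>2 \<le> 2 / (real m + 1) + 2 / (real n + 1)"
      by (simp add: power_mult_distrib)
    thus ?thesis by (simp add: norm_minus_commute)
  qed
  have "Cauchy s"
  proof (rule metric_CauchyI)
    fix e :: real assume e: "0 < e"
    obtain N :: nat where N: "4 / e\<^sup>2 < real N" using reals_Archimedean2 by blast
    show "\<exists>M. \<forall>m\<ge>M. \<forall>n\<ge>M. dist (s m) (s n) < e"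
    proof (intro exI allI impI)
      fix m n assume mn: "N \<le> m" "N \<le> n"
      have e2: "0 < e\<^sup>2" using e by simp
      have "2 / (real m + 1) < e\<^sup>2 / 2"
      proof -
        have "4 / e\<^sup>2 < real m + 1" using N mn by linarith
        thus ?thesis using e2 by (simp add: field_simps)
      qed
      moreover have "2 / (real n + 1) < e\<^sup>2 / 2"
      proof -
        have "4 / e\<^sup>2 < real n + 1" using N mn by linarith
        thus ?thesis using e2 by (simp add: field_simps)
      qed
      ultimately have "(norm (s m - s n))\<^sup>2 < e\<^sup>2" using cs[of m n] by linarith
      hence "norm (s m - s n) < e" using e by (simp add: power_less_imp_less_base)
      thus "dist (s m) (s n) < e" by (simp add: dist_norm)
    qed
  qed
  then obtain p where p: "s \<longlonglongrightarrow> p" using Cauchy_convergent_iff convergent_def by blast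
  have pS: "p \<in> S" using cl sS p closed_sequentially by blast
  have "(\<lambda>n. (norm (x - s n))\<^sup>2) \<longlonglongrightarrow> (norm (x - p))\<^sup>2"
    by (intro tendsto_intros p)
  moreover have "(\<lambda>n. d\<^sup>2 + 1 / (real n + 1)) \<longlonglongrightarrow> d\<^sup>2 + 0"
    using LIMSEQ_inverse_real_of_nat by (intro tendsto_intros) (simp add: inverse_eq_divide add.commute)
  ultimately have pd: "(norm (x - p))\<^sup>2 \<le> d\<^sup>2"
    using sd by (intro LIMSEQ_le) (auto intro: less_imp_le)
  have opt: "(norm (x - p))\<^sup>2 \<le> (norm (x - q))\<^sup>2" if "q \<in> S" for q
  proof -
    have "d\<^sup>2 \<le> (norm (x - q))\<^sup>2" using dle[OF that] d0 by (intro power_mono) auto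
    thus ?thesis using pd by linarith
  qed
  show ?thesis
  proof (intro bexI[OF _ pS] ballI)
    fix s0 assume s0: "s0 \<in> S"
    define w where "w = x - p"
    define c where "c = cinner s0 w"
    define r where "r = 1 / ((norm s0)\<^sup>2 + 1)"
    have r00: "0 < (norm s0)\<^sup>2 + 1" by (simp add: add_nonneg_pos)
    have r0: "0 < r" unfolding r_def using r00 by simp
    have r1: "r * (norm s0)\<^sup>2 < 1" unfolding r_def using r00 by (simp add: field_simps)
    define t where "t = of_real r * c"
    have "p + scaleC t s0 \<in> S" using S pS s0 unfolding csub_def by blast
    hence "(norm w)\<^sup>2 \<le> (norm (w - scaleC t s0))\<^sup>2" using opt unfolding w_def
      by (metis diff_diff_eq)
    also have "(norm (w - scaleC t s0))\<^sup>2 = (norm w)\<^sup>2 - 2 * r * (cmod c)\<^sup>2 + r\<^sup>2 * (cmod c)\<^sup>2 * (norm s0)\<^sup>2"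
    proof -
      have e1: "cinner (w - scaleC t s0) (w - scaleC t s0) =
          cinner w w - t * cinner w s0 - cnj t * cinner s0 w + cnj t * t * cinner s0 s0"
        by (simp add: cinner_diff_left cinner_diff_right cinner_scaleC_left cinner_scaleC_right algebra_simps)
      have cc: "c * cnj c = of_real ((cmod c)\<^sup>2)" by (rule complex_norm_square[symmetric])
      have "cinner w s0 = cnj c" by (simp add: c_def cinner_commute[of w s0])
      have a1: "t * cnj c = of_real (r * (cmod c)\<^sup>2)" unfolding t_def using cc
        by (simp add: mult.assoc)
      have a2: "cnj t * c = of_real (r * (cmod c)\<^sup>2)" unfolding t_def using cc
        by (simp add: mult.commute mult.left_commute)
      have a3: "cnj t * t = of_real (r\<^sup>2 * (cmod c)\<^sup>2)" unfolding t_def using cc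
        by (simp add: power2_eq_square mult.commute mult.left_commute)
      have "cinner w s0 = cnj c" by (simp add: c_def cinner_commute[of w s0])
      hence "cinner (w - scaleC t s0) (w - scaleC t s0) =
          of_real ((norm w)\<^sup>2) - of_real (2 * r * (cmod c)\<^sup>2) + of_real (r\<^sup>2 * (cmod c)\<^sup>2 * (norm s0)\<^sup>2)"
        unfolding e1 c_def[symmetric] using a1 a2 a3 by (simp add: cinner_self)
      thus ?thesis unfolding norm_sq_cinner[of "w - scaleC t s0"] by simp
    qed
    finally have "0 \<le> r * (cmod c)\<^sup>2 * (r * (norm s0)\<^sup>2 - 2)" by (simp add: algebra_simps power2_eq_square)
    moreover have "r * (norm s0)\<^sup>2 - 2 < 0" using r1 by simp
    ultimately have "\<not> 0 < r * (cmod c)\<^sup>2" using mult_pos_neg[of "r * (cmod c)\<^sup>2" "r * (norm s0)\<^sup>2 - 2"] by linarith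
    hence "(cmod c)\<^sup>2 \<le> 0" using r0 by (simp add: zero_less_mult_iff)
    hence "c = 0" by simp
    thus "cinner s0 (x - p) = 0" by (simp add: c_def w_def)
  qed
qed



lemma orth_proj_eq:
  assumes S: "csub S" and p: "p \<in> S" and o: "\<forall>s\<in>S. cinner s (x - p) = 0"
  shows "orth_proj S x = (p::'a::chilbert)"
  unfolding orth_proj_def
proof (rule the_equality)
  show "p \<in> S \<and> (\<forall>s\<in>S. cinner s (x - p) = 0)" using p o by blast
next
  fix q assume q: "q \<in> S \<and> (\<forall>s\<in>S. cinner s (x - q) = 0)"
  have pq: "p - q \<in> S" using csub_diff[OF S] p q by blast
  have "cinner (p - q) (x - q) - cinner (p - q) (x - p) = cinner (p - q) (p - q)"
    by (simp add: cinner_diff_right)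
  hence "cinner (p - q) (p - q) = 0" using q o pq by simp
  thus "q = p" by simp
qed

lemma orth_proj_id: "csub S \<Longrightarrow> x \<in> S \<Longrightarrow> orth_proj S x = (x::'a::chilbert)"
  by (rule orth_proj_eq) auto

lemma orth_proj_props:
  assumes S: "csub S" and cl: "closed S"
  shows "orth_proj S x \<in> S \<and> (\<forall>s\<in>S. cinner s (x - orth_proj S x) = 0)"
proof -
  obtain p where p: "p \<in> S" "\<forall>s\<in>S. cinner s (x - p) = 0" using projection_exists[OF S cl] by blast
  have "orth_proj S x = (p::'a::chilbert)" using orth_proj_eq[OF S p] .
  thus ?thesis using p by simp
qed

lemma unitary_op_clinear: "unitary_op W \<Longrightarrow> clinear W"
  unfolding unitary_op_def bounded_clinear_op_def by blast

lemma unitary_op_bl: "unitary_op W \<Longrightarrow> bounded_linear W"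
  unfolding unitary_op_def by (blast intro: bounded_clinear_op_bl)

lemma unitary_op_norm: "unitary_op W \<Longrightarrow> norm (W x) = norm x"
  unfolding unitary_op_def by (simp add: norm_eq_sqrt_cinner)

lemma clinear_pow: "clinear (W::'a::complex_vector \<Rightarrow> 'a) \<Longrightarrow> clinear (W ^^ k)"
proof (induction k)
  case 0 show ?case by (simp add: clinear_def)
next
  case (Suc k) thus ?case by (simp add: clinear_def)
qed

lemma clinear_0: "clinear f \<Longrightarrow> f 0 = 0"
  unfolding clinear_def by (metis scaleC_zero_left)

lemma clinear_diff: "clinear f \<Longrightarrow> f (x - y) = f x - f y"
  unfolding clinear_def by (metis diff_conv_add_uminus scaleC_minus_left scaleC_one)

lemma clinear_sum: "clinear f \<Longrightarrow> f (sum g A) = (\<Sum>i\<in>A. f (g i))"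
  by (induction A rule: infinite_finite_induct) (auto simp: clinear_0 clinear_def)

lemma clinear_scaleR: "clinear f \<Longrightarrow> f (scaleR r x) = scaleR r (f x)"
  unfolding clinear_def by (simp add: scaleR_scaleC)

lemma unitary_pow_norm: "unitary_op W \<Longrightarrow> norm ((W ^^ k) x) = norm x"
  by (induction k) (auto simp: unitary_op_norm)

lemma unitary_pow_cinner: "unitary_op W \<Longrightarrow> cinner ((W ^^ k) x) ((W ^^ k) y) = cinner x y"
  by (induction k) (auto simp: unitary_op_def)

lemma fixed_pow: "W x = x \<Longrightarrow> (W ^^ k) x = x"
  by (induction k) auto

definition avg :: "('a::complex_vector \<Rightarrow> 'a) \<Rightarrow> nat \<Rightarrow> 'a \<Rightarrow> 'a" where
  "avg W n y = scaleR (1 / real n) (\<Sum>k<n. (W ^^ k) y)"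

lemma avg_clinear: "clinear W \<Longrightarrow> clinear (avg W n)"
proof -
  assume W: "clinear W"
  have p: "\<And>k. clinear (W ^^ k)" using clinear_pow[OF W] .
  show ?thesis unfolding clinear_def avg_def
  proof (intro conjI allI)
    fix x y
    show "scaleR (1 / real n) (\<Sum>k<n. (W ^^ k) (x + y)) =
      scaleR (1 / real n) (\<Sum>k<n. (W ^^ k) x) + scaleR (1 / real n) (\<Sum>k<n. (W ^^ k) y)"
      using p by (simp add: clinear_def sum.distrib scaleR_add_right)
  next
    fix c x
    have "scaleR (1 / real n) (\<Sum>k<n. (W ^^ k) (scaleC c x)) = scaleR (1 / real n) (scaleC c (\<Sum>k<n. (W ^^ k) x))"
      using p by (simp add: clinear_def scaleC_sum_right)
    also have "\<dots> = scaleC c (scaleR (1 / real n) (\<Sum>k<n. (W ^^ k) x))"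
      by (simp add: scaleR_scaleC scaleC_scaleC mult.commute)
    finally show "scaleR (1 / real n) (\<Sum>k<n. (W ^^ k) (scaleC c x)) = scaleC c (scaleR (1 / real n) (\<Sum>k<n. (W ^^ k) x))" .
  qed
qed

lemma avg_norm: "unitary_op W \<Longrightarrow> norm (avg W n y) \<le> norm y"
proof -
  assume W: "unitary_op W"
  have "norm (\<Sum>k<n. (W ^^ k) y) \<le> (\<Sum>k<n. norm ((W ^^ k) y))" by (rule norm_sum)
  also have "\<dots> = real n * norm y" using unitary_pow_norm[OF W] by simp
  finally have a: "norm (\<Sum>k<n. (W ^^ k) y) \<le> real n * norm y" .
  show ?thesis
  proof (cases "n = 0")
    case True thus ?thesis by (simp add: avg_def)
  next
    case False
    thus ?thesis using a by (simp add: avg_def field_simps)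
  qed
qed

lemma avg_fixed: "W f = f \<Longrightarrow> n \<noteq> 0 \<Longrightarrow> avg W n f = f"
  by (simp add: avg_def fixed_pow sum_constant_scaleR)

lemma cinner_avg_fixed: "unitary_op W \<Longrightarrow> W x = x \<Longrightarrow> n \<noteq> 0 \<Longrightarrow> cinner x (avg W n y) = cinner x y"
proof -
  assume W: "unitary_op W" and x: "W x = x" and n: "n \<noteq> 0"
  have "cinner x ((W ^^ k) y) = cinner x y" for k
    using unitary_pow_cinner[OF W, of k x y] fixed_pow[of W x k, OF x] by simp
  thus ?thesis using n by (simp add: avg_def cinner_scaleR_right cinner_sum_right)
qed

lemma mean_ergodic:
  fixes W :: "'a::chilbert \<Rightarrow> 'a"
  assumes W: "unitary_op W"
  shows "\<exists>f. W f = f \<and> (\<lambda>n. avg W n y) \<longlonglongrightarrow> f"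
proof -
  have lW: "clinear W" using W by (rule unitary_op_clinear)
  define R where "R = range (\<lambda>z. z - W z)"
  define M where "M = closure R"
  have addW: "\<And>x y. W (x + y) = W x + W y" and scW: "\<And>c x. W (scaleC c x) = scaleC c (W x)"
    using lW unfolding clinear_def by auto
  have csR: "csub R" unfolding csub_def R_def
  proof (intro conjI ballI allI)
    show "0 \<in> range (\<lambda>z. z - W z)" by (rule range_eqI[of _ _ 0]) (simp add: clinear_0[OF lW])
  next
    fix x y assume "x \<in> range (\<lambda>z. z - W z)" "y \<in> range (\<lambda>z. z - W z)"
    then obtain a b where xa: "x = a - W a" and yb: "y = b - W b" by blast
    have "x + y = (a + b) - (W a + W b)" unfolding xa yb by (simp add: algebra_simps)
    also have "W a + W b = W (a + b)" by (rule addW[symmetric])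
    finally show "x + y \<in> range (\<lambda>z. z - W z)" by blast
  next
    fix c x assume "x \<in> range (\<lambda>z. z - W z)"
    then obtain a where xa: "x = a - W a" by blast
    have "scaleC c x = scaleC c a - scaleC c (W a)" unfolding xa by (rule scaleC_diff_right)
    also have "scaleC c (W a) = W (scaleC c a)" by (rule scW[symmetric])
    finally show "scaleC c x \<in> range (\<lambda>z. z - W z)" by blast
  qed
  have csM: "csub M" unfolding M_def by (rule csub_closure[OF csR])
  have clM: "closed M" unfolding M_def by simp
  define p where "p = orth_proj M y"
  have pM: "p \<in> M" and po: "\<forall>s\<in>M. cinner s (y - p) = 0"
    using orth_proj_props[OF csM clM] unfolding p_def by auto
  define f where "f = y - p"
  have Wf: "W f = f"
  proof -
    have "f - W f \<in> R" unfolding R_def by (rule range_eqI) simp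
    hence "f - W f \<in> M" unfolding M_def using closure_subset by blast
    hence o1: "cinner (f - W f) f = 0" using po unfolding f_def by simp
    hence o2: "cinner (W f) f = cinner f f" by (simp add: cinner_diff_left)
    have "cinner f (W f) = cnj (cinner (W f) f)" by (rule cinner_commute)
    also have "\<dots> = cnj (cinner f f)" using o2 by simp
    also have "\<dots> = cinner f f" by (rule sym[OF cinner_commute[of f f]])
    finally have o3: "cinner f (W f) = cinner f f" .
    have "cinner (W f - f) (W f - f) = cinner (W f) (W f) - cinner (W f) f - cinner f (W f) + cinner f f"
      by (simp add: cinner_diff_left cinner_diff_right)
    also have "cinner (W f) (W f) = cinner f f" using W unfolding unitary_op_def by blast
    finally have "cinner (W f - f) (W f - f) = 0" using o2 o3 by simp
    thus ?thesis by simp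
  qed
  have R0: "(\<lambda>n. avg W n r) \<longlonglongrightarrow> 0" if rR: "r \<in> R" for r
  proof -
    obtain z where z: "r = z - W z" using rR unfolding R_def by blast
    have tel: "(\<Sum>k<n. (W ^^ k) r) = z - (W ^^ n) z" for n
    proof (induction n)
      case 0 thus ?case by simp
    next
      case (Suc n)
      have "(W ^^ n) r = (W ^^ n) z - (W ^^ Suc n) z"
        using clinear_diff[OF clinear_pow[OF lW, of n]] z by (simp add: funpow_swap1)
      thus ?case using Suc by simp
    qed
    have bnd: "norm (avg W n r) \<le> 2 * norm z / real n" for n
    proof -
      have "norm (z - (W ^^ n) z) \<le> 2 * norm z"
        using norm_triangle_ineq4[of z "(W ^^ n) z"] unitary_pow_norm[OF W] by simp
      thus ?thesis unfolding avg_def tel by (simp add: divide_right_mono)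
    qed
    show ?thesis
    proof (rule Lim_null_comparison)
      show "\<forall>\<^sub>F n in sequentially. norm (avg W n r) \<le> 1 / real n * (2 * norm z)"
        using bnd by (intro always_eventually allI) (simp add: field_simps)
      show "(\<lambda>n. 1 / real n * (2 * norm z)) \<longlonglongrightarrow> 0"
        by (intro tendsto_mult_left_zero lim_1_over_n)
    qed
  qed
  have M0: "(\<lambda>n. avg W n m) \<longlonglongrightarrow> 0" if "m \<in> M" for m
  proof (rule LIMSEQ_I)
    fix e :: real assume e: "0 < e"
    have e2: "0 < e / 2" using e by simp
    obtain r where r: "r \<in> R" "dist r m < e / 2"
      using \<open>m \<in> M\<close> e2 unfolding M_def closure_approachable by blast
    obtain N where N: "\<forall>n\<ge>N. norm (avg W n r - 0) < e / 2"
      using R0[OF r(1)] e2 unfolding LIMSEQ_def dist_norm by blast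
    show "\<exists>N. \<forall>n\<ge>N. norm (avg W n m - 0) < e"
    proof (intro exI allI impI)
      fix n assume n: "N \<le> n"
      have "avg W n m = avg W n r + avg W n (m - r)"
        using clinear_diff[OF avg_clinear[OF lW]] by simp
      hence "norm (avg W n m) \<le> norm (avg W n r) + norm (avg W n (m - r))"
        by (simp add: norm_triangle_ineq)
      moreover have "norm (avg W n (m - r)) \<le> norm (m - r)" by (rule avg_norm[OF W])
      moreover have "norm (m - r) < e / 2" using r by (simp add: dist_norm norm_minus_commute)
      ultimately have "norm (avg W n m) < norm (avg W n r) + e / 2" by linarith
      moreover have "norm (avg W n r) < e / 2" using N n by simp
      ultimately show "norm (avg W n m - 0) < e" by simp
    qed
  qed
  have "(\<lambda>n. avg W n f + avg W n p) \<longlonglongrightarrow> f + 0"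
  proof (rule tendsto_add)
    show "(\<lambda>n. avg W n f) \<longlonglongrightarrow> f"
      by (rule tendsto_eventually) (rule eventually_sequentiallyI[of 1], simp add: avg_fixed[of W f, OF Wf])
    show "(\<lambda>n. avg W n p) \<longlonglongrightarrow> 0" by (rule M0[OF pM])
  qed
  moreover have "avg W n f + avg W n p = avg W n y" for n
  proof -
    have yy: "y = f + p" by (simp add: f_def)
    have "avg W n (f + p) = avg W n f + avg W n p" using avg_clinear[OF lW, of n] unfolding clinear_def by auto
    thus ?thesis using yy by simp
  qed
  ultimately have "(\<lambda>n. avg W n y) \<longlonglongrightarrow> f" by simp
  thus ?thesis using Wf by blast
qed

lemma weak_limit_closure:
  fixes a :: "nat \<Rightarrow> 'a::complex_inner"
  assumes bnd: "\<And>n. norm (a n) \<le> C"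
    and D: "\<And>v. v \<in> D \<Longrightarrow> (\<lambda>n. cinner v (a n)) \<longlonglongrightarrow> cinner v g"
    and x: "x \<in> closure D"
  shows "(\<lambda>n. cinner x (a n)) \<longlonglongrightarrow> cinner x g"
proof (rule LIMSEQ_I)
  fix e :: real assume e: "0 < e"
  have C0: "0 \<le> C" using bnd[of 0] norm_ge_zero order_trans by blast
  define B where "B = C + norm g + 1"
  have B: "0 < B" unfolding B_def using C0 by (simp add: add_nonneg_pos)
  have eB: "0 < e / (2 * B)" using B e by simp
  obtain v where v: "v \<in> D" "dist v x < e / (2 * B)"
    using x eB unfolding closure_approachable by blast
  have e2: "0 < e / 2" using e by simp
  obtain N where N: "\<forall>n\<ge>N. norm (cinner v (a n) - cinner v g) < e / 2"
    using D[OF v(1)] e2 unfolding LIMSEQ_def dist_norm by blast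
  show "\<exists>N. \<forall>n\<ge>N. norm (cinner x (a n) - cinner x g) < e"
  proof (intro exI allI impI)
    fix n assume n: "N \<le> n"
    have eq: "cinner x (a n) - cinner x g = cinner (x - v) (a n) + (cinner v (a n) - cinner v g) - cinner (x - v) g"
      by (simp add: cinner_diff_left)
    have d: "norm (x - v) * B < e / 2" using v B by (simp add: dist_norm norm_minus_commute field_simps)
    have "norm (cinner (x - v) (a n)) + norm (cinner (x - v) g) \<le> norm (x - v) * C + norm (x - v) * norm g"
      using Cauchy_Schwarz_c[of "x - v" "a n"] Cauchy_Schwarz_c[of "x - v" g]
        mult_left_mono[OF bnd[of n] norm_ge_zero[of "x - v"]] by simp
    also have "\<dots> \<le> norm (x - v) * B" unfolding B_def by (simp add: algebra_simps)
    finally have "norm (cinner (x - v) (a n)) + norm (cinner (x - v) g) < e / 2" using d by simp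
    moreover have "norm (cinner x (a n) - cinner x g) \<le> norm (cinner (x - v) (a n)) + norm (cinner v (a n) - cinner v g) + norm (cinner (x - v) g)"
      unfolding eq using norm_triangle_ineq4[of "cinner (x - v) (a n) + (cinner v (a n) - cinner v g)" "cinner (x - v) g"]
        norm_triangle_ineq[of "cinner (x - v) (a n)" "cinner v (a n) - cinner v g"] by linarith
    moreover have "norm (cinner v (a n) - cinner v g) < e / 2" using N n by blast
    ultimately show "norm (cinner x (a n) - cinner x g) < e" by linarith
  qed
qed



instance cstar_algebra \<subseteq> banach ..


lemma adj_zero[simp]: "adj (0::'a::cstar_algebra) = 0"
proof -
  have "adj (0 + 0) = adj 0 + adj (0::'a)" by (rule adj_add)
  thus ?thesis by simp
qed
lemma adj_minus: "adj (- x::'a::cstar_algebra) = - adj x"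
proof -
  have "adj (x + - x) = adj x + adj (- x)" by (rule adj_add)
  hence "adj x + adj (- x) = 0" by simp
  thus ?thesis by (rule add.inverse_unique[symmetric])
qed
lemma adj_diff: "adj (x - y::'a::cstar_algebra) = adj x - adj y"
  by (simp only: adj_add adj_minus diff_conv_add_uminus)
lemma adj_one[simp]: "adj (1::'a::cstar_algebra) = 1"
proof -
  have "adj (adj 1 * 1) = adj 1 * adj (adj (1::'a))" by (rule adj_mult)
  thus ?thesis by (simp add: adj_adj)
qed
lemma adj_scaleR: "adj (scaleR r x::'a::cstar_algebra) = scaleR r (adj x)"
  by (simp add: scaleR_scaleC adj_scaleC)
lemma adj_power: "adj (x ^ k::'a::cstar_algebra) = (adj x) ^ k"
  by (induction k) (simp_all add: adj_mult power_Suc2 power_commutes)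
lemma adj_sum: "adj (sum f A) = (\<Sum>i\<in>A. adj (f i::'a::cstar_algebra))"
  by (induction A rule: infinite_finite_induct) (auto simp: adj_add)

lemma norm_adj: "norm (adj x) = norm (x::'a::cstar_algebra)"
proof -
  have le: "norm y \<le> norm (adj y)" for y :: 'a
  proof (cases "y = 0")
    case True thus ?thesis by simp
  next
    case False
    have "(norm y)\<^sup>2 = norm (adj y * y)" by (rule cstar_identity[symmetric])
    also have "\<dots> \<le> norm (adj y) * norm y" by (rule norm_mult_ineq)
    finally have "norm y * norm y \<le> norm (adj y) * norm y" by (simp add: power2_eq_square)
    thus ?thesis using False by simp
  qed
  show ?thesis using le[of x] le[of "adj x"] by (simp add: adj_adj)
qed

lemma bounded_linear_adj: "bounded_linear (adj :: 'a::cstar_algebra \<Rightarrow> 'a)"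
  by (rule bounded_linear_intro[where K=1]) (simp_all add: adj_add adj_scaleR norm_adj)

lemma cstar_sqrt:
  fixes h :: "'a::cstar_algebra"
  assumes sa: "adj h = h" and nh: "norm h \<le> 1/4"
  shows "\<exists>s. adj s * s = 1 - h"
proof -
  define S where "S = {g::'a. norm g \<le> 1/2} \<inter> {g. adj g = g}"
  define T where "T g = scaleR (1/2) (g * g + h)" for g :: 'a
  have clS: "closed S" unfolding S_def
    by (intro closed_Int closed_Collect_le closed_Collect_eq continuous_on_norm_id continuous_on_const
        continuous_on_id linear_continuous_on bounded_linear_adj)
  have "0 \<in> S" unfolding S_def by simp
  hence S0: "S \<noteq> {}" by blast
  have TS: "T ` S \<subseteq> S"
  proof
    fix y assume "y \<in> T ` S"
    then obtain g where g: "g \<in> S" "y = T g" by blast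
    have "norm (g * g + h) \<le> norm (g * g) + norm h" by (rule norm_triangle_ineq)
    also have "norm (g * g) \<le> norm g * norm g" by (rule norm_mult_ineq)
    also have "norm g * norm g \<le> 1/2 * (1/2)" using g(1) unfolding S_def by (intro mult_mono) auto
    finally have "norm (g * g + h) \<le> 1/2" using nh by simp
    hence "norm y \<le> 1/2" unfolding g(2) T_def by simp
    moreover have "adj y = y" using g unfolding S_def T_def by (simp add: adj_scaleR adj_add adj_mult sa)
    ultimately show "y \<in> S" unfolding S_def by simp
  qed
  have lip: "dist (T x) (T y) \<le> 1/2 * dist x y" if "x \<in> S" "y \<in> S" for x y
  proof -
    have e: "T x - T y = scaleR (1/2) (x * (x - y) + (x - y) * y)" unfolding T_def
      by (simp add: algebra_simps scaleR_diff_right)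
    have "norm (x * (x - y) + (x - y) * y) \<le> norm (x * (x - y)) + norm ((x - y) * y)" by (rule norm_triangle_ineq)
    also have "\<dots> \<le> norm x * norm (x - y) + norm (x - y) * norm y" by (intro add_mono norm_mult_ineq)
    also have "\<dots> \<le> 1/2 * norm (x - y) + norm (x - y) * (1/2)" using that unfolding S_def
      by (intro add_mono mult_mono) auto
    finally have "norm (x * (x - y) + (x - y) * y) \<le> norm (x - y)" by simp
    thus ?thesis unfolding dist_norm e by simp
  qed
  obtain g where g: "g \<in> S" "T g = g"
  proof -
    have "\<exists>!x\<in>S. T x = x"
      by (rule Banach_fix[OF complete_eq_closed[THEN iffD2, OF clS] S0 _ _ TS, where c="1/2"]) (use lip in auto)
    thus ?thesis using that by blast
  qed
  have gg: "g * g = scaleR 2 g - h"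
  proof -
    have "scaleR 2 (T g) = g * g + h" unfolding T_def by simp
    thus ?thesis using g(2) by (simp add: algebra_simps)
  qed
  have ag: "adj g = g" using g(1) unfolding S_def by simp
  have "adj (1 - g) * (1 - g) = 1 - g - g + g * g" by (simp add: adj_diff ag algebra_simps)
  also have "\<dots> = 1 - h" unfolding gg by (simp add: scaleR_2)
  finally show ?thesis by blast
qed

lemma state_lin:
  assumes "is_state \<phi>"
  shows "\<phi> (x + y) = \<phi> x + \<phi> y" "\<phi> (scaleC c x) = c * \<phi> x" "\<phi> 0 = 0"
    "\<phi> (x - y) = \<phi> x - \<phi> y" "\<phi> (scaleR r x) = of_real r * \<phi> x" "\<phi> 1 = 1"
proof -
  have l: "clinear_functional \<phi>" using assms unfolding is_state_def by blast
  show a: "\<phi> (x + y) = \<phi> x + \<phi> y" for x y using l unfolding clinear_functional_def by blast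
  show b: "\<phi> (scaleC c x) = c * \<phi> x" for c x using l unfolding clinear_functional_def by blast
  show z: "\<phi> 0 = 0" using b[of 0 0] by simp
  show "\<phi> (x - y) = \<phi> x - \<phi> y"
    using b[of "-1" y] a[of x "scaleC (-1) y"] by (simp add: scaleC_minus_left scaleC_one)
  show "\<phi> (scaleR r x) = of_real r * \<phi> x" using b by (simp add: scaleR_scaleC)
  show "\<phi> 1 = 1" using assms unfolding is_state_def by blast
qed

lemma state_pos: "is_state \<phi> \<Longrightarrow> Im (\<phi> (adj a * a)) = 0 \<and> 0 \<le> Re (\<phi> (adj a * a))"
  unfolding is_state_def by blast

lemma state_bound:
  fixes \<phi> :: "'a::cstar_algebra \<Rightarrow> complex"
  assumes st: "is_state \<phi>"
  shows "Re (\<phi> (adj y * y)) \<le> 4 * (norm y)\<^sup>2"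
proof (cases "y = 0")
  case True thus ?thesis using state_lin(3)[OF st] by simp
next
  case False
  define t where "t = 2 * norm y"
  have t: "0 < t" using False by (simp add: t_def)
  define z where "z = scaleR (1 / t) y"
  define h where "h = adj z * z"
  have hz: "h = scaleR (1 / t ^ 2) (adj y * y)"
    by (simp add: h_def z_def adj_scaleR power2_eq_square)
  have nz: "norm z = 1/2" using t by (simp add: z_def t_def)
  have "norm h \<le> norm (adj z) * norm z" unfolding h_def by (rule norm_mult_ineq)
  hence nh: "norm h \<le> 1/4" by (simp add: norm_adj nz)
  have sa: "adj h = h" by (simp add: h_def adj_mult adj_adj)
  obtain s where s: "adj s * s = 1 - h" using cstar_sqrt[OF sa nh] by blast
  have "0 \<le> Re (\<phi> (adj s * s))" using state_pos[OF st] by blast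
  also have "\<phi> (adj s * s) = 1 - \<phi> h" unfolding s by (simp add: state_lin[OF st])
  finally have "Re (\<phi> h) \<le> 1" by simp
  moreover have "\<phi> h = of_real (1 / t ^ 2) * \<phi> (adj y * y)" unfolding hz by (simp add: state_lin[OF st])
  ultimately have "Re (\<phi> (adj y * y)) / t ^ 2 \<le> 1" by simp
  hence "Re (\<phi> (adj y * y)) \<le> t ^ 2" using t by (simp add: field_simps)
  thus ?thesis by (simp add: t_def power_mult_distrib)
qed



lemma star_hom_props:
  assumes "star_hom f"
  shows "f (x * y) = f x * f y" "f (adj x) = adj (f x)" "f 1 = 1" "f (x + y) = f x + f y"
    "f (scaleC c x) = scaleC c (f x)" "clinear f"
  using assms unfolding star_hom_def clinear_def by auto

lemma star_hom_0: "star_hom f \<Longrightarrow> f 0 = 0"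
  using star_hom_props(6) clinear_0 by blast

lemma star_hom_comp: "star_hom f \<Longrightarrow> star_hom g \<Longrightarrow> star_hom (f \<circ> g)"
  unfolding star_hom_def clinear_def by auto

lemma star_hom_id: "star_hom id"
  unfolding star_hom_def clinear_def by auto

lemma star_aut_inv: assumes "star_aut f" shows "star_aut (inv f)"
proof -
  have b: "bij f" and h: "star_hom f" using assms unfolding star_aut_def by auto
  have fi: "f (inv f x) = x" for x using b by (simp add: bij_is_surj surj_f_inv_f)
  have if': "inv f (f x) = x" for x using b by (simp add: bij_is_inj)
  have "inv f y = inv f z" if "y = z" for y z using that by simp
  have hh: "star_hom (inv f)" unfolding star_hom_def clinear_def
  proof (intro conjI allI)
    fix x y show "inv f (x + y) = inv f x + inv f y"
      by (metis fi if' star_hom_props(4)[OF h])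
  next
    fix c x show "inv f (scaleC c x) = scaleC c (inv f x)"
      by (metis fi if' star_hom_props(5)[OF h])
  next
    fix x y show "inv f (x * y) = inv f x * inv f y"
      by (metis fi if' star_hom_props(1)[OF h])
  next
    fix x show "inv f (adj x) = adj (inv f x)"
      by (metis fi if' star_hom_props(2)[OF h])
  next
    show "inv f 1 = 1" by (metis if' star_hom_props(3)[OF h])
  qed
  thus ?thesis unfolding star_aut_def using b bij_imp_bij_inv by blast
qed

lemma star_hom_pow: "star_hom (f::'a::cstar_algebra \<Rightarrow> 'a) \<Longrightarrow> star_hom (f ^^ k)"
proof (induction k)
  case 0
  have "f ^^ 0 = id" by (simp add: fun_eq_iff)
  thus ?case using star_hom_id by (simp add: id_def)
next
  case (Suc k)
  have eq: "f ^^ Suc k = f \<circ> f ^^ k" by (simp add: fun_eq_iff)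
  have "star_hom (f \<circ> f ^^ k)" using star_hom_comp[of f "f ^^ k"] Suc by blast
  thus ?case by (simp only: eq)
qed

lemma aut_pow_hom: "star_aut \<alpha> \<Longrightarrow> star_hom (aut_pow \<alpha> n)"
  unfolding aut_pow_def using star_aut_inv star_hom_pow unfolding star_aut_def by auto

lemma aut_pow_cancel:
  assumes "star_aut \<alpha>"
  shows "aut_pow \<alpha> n (aut_pow \<alpha> (- n) x) = x"
proof -
  have b: "bij \<alpha>" using assms unfolding star_aut_def by auto
  have fi: "\<alpha> (inv \<alpha> x) = x" for x using b by (simp add: bij_is_surj surj_f_inv_f)
  have if': "inv \<alpha> (\<alpha> x) = x" for x using b by (simp add: bij_is_inj)
  have A: "(\<alpha> ^^ k) ((inv \<alpha> ^^ k) x) = x" for k x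
    by (induction k arbitrary: x) (simp_all add: fi funpow_swap1)
  have B: "(inv \<alpha> ^^ k) ((\<alpha> ^^ k) x) = x" for k x
    by (induction k arbitrary: x) (simp_all add: if' funpow_swap1)
  show ?thesis
  proof (cases "n = 0")
    case True thus ?thesis by (simp add: aut_pow_def)
  next
    case False
    thus ?thesis unfolding aut_pow_def using A B by auto
  qed
qed


locale M8 =
  fixes \<theta> \<alpha> :: "'a::cstar_algebra \<Rightarrow> 'a" and u :: 'a
    and \<iota> :: "'a \<Rightarrow> 'b::cstar_algebra" and V :: 'b and E :: "'b \<Rightarrow> 'a"
    and \<Phi> :: "'b \<Rightarrow> 'b"
    and \<omega>\<^sub>o :: "'a \<Rightarrow> complex" and \<omega> :: "'b \<Rightarrow> complex"
    and \<pi> :: "'b \<Rightarrow> 'h::chilbert \<Rightarrow> 'h" and W :: "'h \<Rightarrow> 'h" and \<xi> :: 'h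
    and K :: "'h set"
  assumes aut_theta: "star_aut \<theta>" and aut_alpha: "star_aut \<alpha>"
    and cp: "crossed_product \<alpha> \<iota> V E"
    and unit_u: "unitary u"
    and comm: "\<And>a. u * \<alpha> (\<theta> a) = \<theta> (\<alpha> a) * u"
    and Phi_aut: "star_aut \<Phi>"
    and Phi_A: "\<And>a. \<Phi> (\<iota> a) = \<iota> (\<theta> a)"
    and Phi_V: "\<Phi> V = \<iota> u * V"
    and omega_o: "invariant_state \<omega>\<^sub>o \<theta>"
    and omega_def: "\<omega> = (\<lambda>b. \<omega>\<^sub>o (E b))"
    and GNS: "covariant_GNS \<omega> \<Phi> \<pi> W \<xi>"
    and K_def: "K = closure (range (\<lambda>a. \<pi> (\<iota> a) \<xi>))"
begin

lemma ih: "star_hom \<iota>" using cp unfolding crossed_product_def by blast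
lemma Vu: "adj V * V = 1" "V * adj V = 1" using cp unfolding crossed_product_def unitary_def by auto
lemma Vconj: "V * \<iota> a * adj V = \<iota> (\<alpha> a)" using cp unfolding crossed_product_def by blast
lemma Eform: "E (\<iota> a * upow V n) = (if n = 0 then a else 0)" using cp unfolding crossed_product_def by blast
lemma Phih: "star_hom \<Phi>" using Phi_aut unfolding star_aut_def by blast
lemma ah: "star_hom \<alpha>" using aut_alpha unfolding star_aut_def by blast
lemma ab: "bij \<alpha>" using aut_alpha unfolding star_aut_def by blast
lemma alpha_inv: "\<alpha> (inv \<alpha> x) = x" "inv \<alpha> (\<alpha> x) = x"
  using ab by (auto simp: bij_is_surj surj_f_inv_f bij_is_inj)

lemma VA: "V * \<iota> a = \<iota> (\<alpha> a) * V"
proof -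
  have "\<iota> (\<alpha> a) * V = V * \<iota> a * (adj V * V)" by (simp add: Vconj[symmetric] mult.assoc)
  thus ?thesis by (simp add: Vu)
qed

lemma VAadj: "adj V * \<iota> a = \<iota> (inv \<alpha> a) * adj V"
proof -
  have "V * \<iota> (inv \<alpha> a) = \<iota> a * V" using VA[of "inv \<alpha> a"] by (simp add: alpha_inv)
  hence "adj V * (V * \<iota> (inv \<alpha> a)) * adj V = adj V * (\<iota> a * V) * adj V" by simp
  thus ?thesis by (simp add: mult.assoc Vu) (simp add: mult.assoc[symmetric] Vu)
qed

lemma VpowA: "V ^ k * \<iota> a = \<iota> ((\<alpha> ^^ k) a) * V ^ k"
proof (induction k arbitrary: a)
  case 0 thus ?case by simp
next
  case (Suc k)
  have "V ^ Suc k * \<iota> a = V * (V ^ k * \<iota> a)" by (simp add: mult.assoc)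
  also have "\<dots> = (V * \<iota> ((\<alpha> ^^ k) a)) * V ^ k" by (simp add: Suc mult.assoc)
  also have "\<dots> = \<iota> ((\<alpha> ^^ Suc k) a) * V ^ Suc k" by (simp add: VA mult.assoc)
  finally show ?case .
qed

lemma adjVpowA: "adj V ^ k * \<iota> a = \<iota> ((inv \<alpha> ^^ k) a) * adj V ^ k"
proof (induction k arbitrary: a)
  case 0 thus ?case by simp
next
  case (Suc k)
  have "adj V ^ Suc k * \<iota> a = adj V * (adj V ^ k * \<iota> a)" by (simp add: mult.assoc)
  also have "\<dots> = (adj V * \<iota> ((inv \<alpha> ^^ k) a)) * adj V ^ k" by (simp add: Suc mult.assoc)
  also have "\<dots> = \<iota> ((inv \<alpha> ^^ Suc k) a) * adj V ^ Suc k" by (simp add: VAadj mult.assoc)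
  finally show ?case .
qed

lemma upowA: "upow V n * \<iota> a = \<iota> (aut_pow \<alpha> n a) * upow V n"
  unfolding upow_def aut_pow_def by (simp add: VpowA adjVpowA)

lemma upow_adj: "adj (upow V n) = upow V (- n)"
proof (cases "n = 0")
  case True thus ?thesis by (simp add: upow_def)
next
  case False
  thus ?thesis unfolding upow_def by (auto simp: adj_power adj_adj)
qed

lemma pow_cancel: "adj V ^ k * V ^ k = 1" "V ^ k * adj V ^ k = 1"
proof (induction k)
  case 0 show "adj V ^ 0 * V ^ 0 = 1" "V ^ 0 * adj V ^ 0 = 1" by simp_all
next
  case (Suc k)
  have "adj V ^ Suc k * V ^ Suc k = adj V ^ k * (adj V * V) * V ^ k"
    unfolding power_Suc2[of "adj V"] power_Suc[of V] by (simp only: mult.assoc)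
  thus "adj V ^ Suc k * V ^ Suc k = 1" using Suc Vu by simp
  have "V ^ Suc k * adj V ^ Suc k = V ^ k * (V * adj V) * adj V ^ k"
    unfolding power_Suc2[of "V"] power_Suc[of "adj V"] by (simp only: mult.assoc)
  thus "V ^ Suc k * adj V ^ Suc k = 1" using Suc Vu by simp
qed

lemma upow_cancel: "upow V (- n) * upow V n = 1"
  unfolding upow_def using pow_cancel by (cases "n = 0") auto

lemma upow_zero[simp]: "upow V 0 = 1" by (simp add: upow_def)

lemma Phi_Vpow: "\<Phi> (V ^ k) = \<iota> (useq_pos \<alpha> u k) * V ^ k"
proof (induction k)
  case 0 thus ?case using star_hom_props(3)[OF Phih] star_hom_props(3)[OF ih] by simp
next
  case (Suc k)
  have "\<Phi> (V ^ Suc k) = \<Phi> (V ^ k) * \<Phi> V" unfolding power_Suc2 by (rule star_hom_props(1)[OF Phih])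
  also have "\<dots> = \<iota> (useq_pos \<alpha> u k) * (V ^ k * \<iota> u) * V" by (simp add: Suc Phi_V mult.assoc)
  also have "\<dots> = \<iota> (useq_pos \<alpha> u (Suc k)) * V ^ Suc k"
    by (simp del: power_Suc add: VpowA mult.assoc star_hom_props(1)[OF ih] power_Suc2)
  finally show ?case .
qed

lemma Phi_adjV: "\<Phi> (adj V) = \<iota> (inv \<alpha> (adj u)) * adj V"
proof -
  have "\<Phi> (adj V) = adj (\<iota> u * V)" by (simp add: star_hom_props(2)[OF Phih] Phi_V)
  also have "\<dots> = adj V * \<iota> (adj u)" by (simp add: adj_mult star_hom_props(2)[OF ih])
  finally show ?thesis by (simp add: VAadj)
qed

lemma Phi_adjVpow: "\<Phi> (adj V ^ k) = \<iota> (useq_neg \<alpha> u k) * adj V ^ k"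
proof (induction k)
  case 0 thus ?case using star_hom_props(3)[OF Phih] star_hom_props(3)[OF ih] by simp
next
  case (Suc k)
  have "\<Phi> (adj V ^ Suc k) = \<Phi> (adj V ^ k) * \<Phi> (adj V)" unfolding power_Suc2 by (rule star_hom_props(1)[OF Phih])
  also have "\<dots> = \<iota> (useq_neg \<alpha> u k) * (adj V ^ k * \<iota> (inv \<alpha> (adj u))) * adj V"
    by (simp add: Suc Phi_adjV mult.assoc)
  also have "\<dots> = \<iota> (useq_neg \<alpha> u (Suc k)) * adj V ^ Suc k"
    by (simp del: power_Suc add: adjVpowA mult.assoc star_hom_props(1)[OF ih] power_Suc2 funpow_swap1)
  finally show ?case .
qed

lemma Phi_upow: "\<Phi> (upow V n) = \<iota> (useq \<alpha> u n) * upow V n"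
  unfolding upow_def useq_def by (simp add: Phi_Vpow Phi_adjVpow)

lemma E_iVi: "E (\<iota> a * upow V m * \<iota> b) = (if m = 0 then a * b else 0)"
proof -
  have "\<iota> a * upow V m * \<iota> b = \<iota> (a * aut_pow \<alpha> m b) * upow V m"
    by (simp add: mult.assoc upowA star_hom_props(1)[OF ih])
  thus ?thesis by (simp add: Eform aut_pow_def)
qed

lemma Phi_pow_A: "(\<Phi> ^^ k) (\<iota> b) = \<iota> ((\<theta> ^^ k) b)"
  by (induction k) (simp_all add: Phi_A)

end



lemma cinner_closure_left:
  assumes "\<forall>s\<in>S. cinner (f s) z = c" "bounded_linear f" "x \<in> closure S"
  shows "cinner (f x) (z::'a::complex_inner) = c"
proof -
  obtain q where q: "\<forall>n. q n \<in> S" "q \<longlonglongrightarrow> x" using assms(3) unfolding closure_sequential by blast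
  have "(\<lambda>n. cinner (f (q n)) z) \<longlonglongrightarrow> cinner (f x) z"
    by (intro tendsto_cinner bounded_linear.tendsto[OF assms(2)] q(2) tendsto_const)
  moreover have "(\<lambda>n. cinner (f (q n)) z) = (\<lambda>n. c)" using q(1) assms(1) by auto
  ultimately show ?thesis using LIMSEQ_unique tendsto_const by metis
qed

lemma cinner_closure_right:
  assumes "\<forall>s\<in>S. cinner z (f s) = c" "bounded_linear f" "x \<in> closure S"
  shows "cinner (z::'a::complex_inner) (f x) = c"
proof -
  obtain q where q: "\<forall>n. q n \<in> S" "q \<longlonglongrightarrow> x" using assms(3) unfolding closure_sequential by blast
  have "(\<lambda>n. cinner z (f (q n))) \<longlonglongrightarrow> cinner z (f x)"
    by (intro tendsto_cinner bounded_linear.tendsto[OF assms(2)] q(2) tendsto_const)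
  moreover have "(\<lambda>n. cinner z (f (q n))) = (\<lambda>n. c)" using q(1) assms(1) by auto
  ultimately show ?thesis using LIMSEQ_unique tendsto_const by metis
qed

lemma bl_id: "bounded_linear (\<lambda>x. x)" by (rule bounded_linear_ident)

lemma eq_on_closure:
  assumes "bounded_linear f" "bounded_linear g" "\<forall>s\<in>S. f s = g s" "x \<in> closure S"
  shows "f x = g x"
proof -
  obtain q where q: "\<forall>n. q n \<in> S" "q \<longlonglongrightarrow> x" using assms(4) unfolding closure_sequential by blast
  have "(\<lambda>n. f (q n)) \<longlonglongrightarrow> f x" by (rule bounded_linear.tendsto[OF assms(1) q(2)])
  moreover have "(\<lambda>n. f (q n)) \<longlonglongrightarrow> g x"
  proof -
    have "(\<lambda>n. g (q n)) \<longlonglongrightarrow> g x" by (rule bounded_linear.tendsto[OF assms(2) q(2)])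
    moreover have "(\<lambda>n. g (q n)) = (\<lambda>n. f (q n))" using q(1) assms(3) by auto
    ultimately show ?thesis by simp
  qed
  ultimately show ?thesis using LIMSEQ_unique by blast
qed

lemma map_closure:
  assumes "bounded_linear f" "f ` S \<subseteq> closure T" "x \<in> closure S"
  shows "f x \<in> closure T"
proof -
  obtain q where q: "\<forall>n. q n \<in> S" "q \<longlonglongrightarrow> x" using assms(3) unfolding closure_sequential by blast
  have "(\<lambda>n. f (q n)) \<longlonglongrightarrow> f x" by (rule bounded_linear.tendsto[OF assms(1) q(2)])
  moreover have "\<forall>n. f (q n) \<in> closure T" using q(1) assms(2) by auto
  ultimately show ?thesis using closed_sequentially[OF closed_closure[of T], of "\<lambda>n. f (q n)"] by blast
qed

lemma proj_commute:
  fixes A A' :: "'a::chilbert \<Rightarrow> 'a"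
  assumes K: "csub K" "closed K" and A: "bounded_linear A" "clinear A"
    and AK: "\<And>k. k \<in> K \<Longrightarrow> A k \<in> K" and A'K: "\<And>k. k \<in> K \<Longrightarrow> A' k \<in> K"
    and adj: "\<And>v w. cinner (A' v) w = cinner v (A w)"
  shows "orth_proj K (A z) = A (orth_proj K z)"
proof -
  define p where "p = orth_proj K z"
  have p: "p \<in> K" "\<forall>s\<in>K. cinner s (z - p) = 0" using orth_proj_props[OF K] unfolding p_def by auto
  show ?thesis unfolding p_def[symmetric]
  proof (rule orth_proj_eq[OF K(1)])
    show "A p \<in> K" using AK p by blast
    show "\<forall>s\<in>K. cinner s (A z - A p) = 0"
    proof
      fix s assume s: "s \<in> K"
      have "cinner s (A z - A p) = cinner s (A (z - p))" using clinear_diff[OF A(2)] by simp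
      also have "\<dots> = cinner (A' s) (z - p)" by (rule adj[symmetric])
      also have "\<dots> = 0" using p A'K s by blast
      finally show "cinner s (A z - A p) = 0" .
    qed
  qed
qed

lemma unitary_inv:
  assumes W: "unitary_op W"
  shows "W (inv W x) = x" "inv W (W x) = x" "cinner (inv W v) w = cinner v (W w)"
    "bounded_linear (inv W)" "clinear (inv W)"
proof -
  have b: "bij W" using W unfolding unitary_op_def by blast
  show wi: "W (inv W x) = x" for x using b by (simp add: bij_is_surj surj_f_inv_f)
  show iw: "inv W (W x) = x" for x using b by (simp add: bij_is_inj)
  show "cinner (inv W v) w = cinner v (W w)"
  proof -
    have "cinner (W (inv W v)) (W w) = cinner (inv W v) w" using W unfolding unitary_op_def by blast
    thus ?thesis using wi by simp
  qed
  have l: "clinear W" by (rule unitary_op_clinear[OF W])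
  show cl: "clinear (inv W)" unfolding clinear_def
  proof (intro conjI allI)
    fix x y
    have "W (inv W x + inv W y) = x + y" using l wi unfolding clinear_def by simp
    hence "inv W (W (inv W x + inv W y)) = inv W (x + y)" by simp
    thus "inv W (x + y) = inv W x + inv W y" using iw by simp
  next
    fix c x
    have "W (scaleC c (inv W x)) = scaleC c x" using l wi unfolding clinear_def by simp
    hence "inv W (W (scaleC c (inv W x))) = inv W (scaleC c x)" by simp
    thus "inv W (scaleC c x) = scaleC c (inv W x)" using iw by simp
  qed
  show "bounded_linear (inv W)"
  proof (rule bounded_linear_intro[where K=1])
    fix x y show "inv W (x + y) = inv W x + inv W y" using cl unfolding clinear_def by blast
    fix r show "inv W (scaleR r x) = scaleR r (inv W x)" using clinear_scaleR[OF cl] by blast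
    show "norm (inv W x) \<le> norm x * 1" using unitary_op_norm[OF W, of "inv W x"] wi by simp
  qed
qed

context M8 begin

lemma rep: "representation \<pi>" using GNS unfolding covariant_GNS_def by blast
lemma pi_bcl: "bounded_clinear_op (\<pi> b)" using rep unfolding representation_def by blast
lemma pi_bl: "bounded_linear (\<pi> b)" using bounded_clinear_op_bl[OF pi_bcl] .
lemma pi_cl: "clinear (\<pi> b)" using pi_bcl unfolding bounded_clinear_op_def by blast
lemma pi_add: "\<pi> (b + c) x = \<pi> b x + \<pi> c x" using rep unfolding representation_def by simp
lemma pi_scaleC: "\<pi> (scaleC z b) x = scaleC z (\<pi> b x)" using rep unfolding representation_def by simp
lemma pi_mult: "\<pi> (b * c) x = \<pi> b (\<pi> c x)" using rep unfolding representation_def by simp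
lemma pi_one: "\<pi> 1 x = x" using rep unfolding representation_def by simp
lemma pi_adj: "cinner (\<pi> (adj b) x) y = cinner x (\<pi> b y)" using rep unfolding representation_def by blast
lemma pi_zero: "\<pi> 0 x = 0" using pi_scaleC[of 0 0 x] by simp
lemma pi_sum: "\<pi> (sum f A) x = (\<Sum>i\<in>A. \<pi> (f i) x)"
  by (induction A rule: infinite_finite_induct) (auto simp: pi_zero pi_add)
lemma pi_diff: "\<pi> (b - c) x = \<pi> b x - \<pi> c x"
  using pi_add[of b "scaleC (-1) c" x] pi_scaleC[of "-1" c x]
  by (simp add: scaleC_minus_left scaleC_one)
lemma pi_diff_right: "\<pi> b (x - y) = \<pi> b x - \<pi> b y" using clinear_diff[OF pi_cl] .

lemma Wu: "unitary_op W" using GNS unfolding covariant_GNS_def by blast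
lemma Wxi: "W \<xi> = \<xi>" using GNS unfolding covariant_GNS_def by blast
lemma Wvec: "W (\<pi> b \<xi>) = \<pi> (\<Phi> b) \<xi>" using GNS unfolding covariant_GNS_def by blast
lemma omega_vec: "\<omega> b = cinner \<xi> (\<pi> b \<xi>)" using GNS unfolding covariant_GNS_def by simp
lemma dens: "closure (range (\<lambda>b. \<pi> b \<xi>)) = UNIV" using GNS unfolding covariant_GNS_def by blast
lemma Wbl: "bounded_linear W" using unitary_op_bl[OF Wu] .
lemma Wcl: "clinear W" using unitary_op_clinear[OF Wu] .
lemma st: "is_state \<omega>\<^sub>o" using omega_o unfolding invariant_state_def by blast
lemma Ecl: "clinear E" using cp unfolding crossed_product_def by (elim conjE) assumption
lemma Econt: "continuous_on UNIV E" using cp unfolding crossed_product_def by (elim conjE) assumption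
lemma Epos_all: "\<forall>b. positive (E (adj b * b))" using cp unfolding crossed_product_def by (elim conjE) assumption
lemma Epos: "positive (E (adj b * b))" using Epos_all by (rule spec)
lemma D0dense: "closure {\<Sum>n\<in>F. \<iota> (f n) * upow V n | F f. finite F} = UNIV"
  using cp unfolding crossed_product_def by (elim conjE) assumption

lemma inner_vec: "cinner (\<pi> b \<xi>) (\<pi> c \<xi>) = \<omega> (adj b * c)"
proof -
  have "cinner (\<pi> b \<xi>) (\<pi> c \<xi>) = cinner (\<pi> (adj (adj b)) \<xi>) (\<pi> c \<xi>)" by (simp add: adj_adj)
  also have "\<dots> = cinner \<xi> (\<pi> (adj b) (\<pi> c \<xi>))" by (rule pi_adj)
  also have "\<dots> = \<omega> (adj b * c)" by (simp add: omega_vec pi_mult)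
  finally show ?thesis .
qed

lemma inner_vec_xi: "cinner (\<pi> b \<xi>) \<xi> = \<omega> (adj b)"
  using inner_vec[of b 1] by (simp add: pi_one)

lemma E_one: "E 1 = 1"
  using Eform[of 1 0] by (simp add: star_hom_props(3)[OF ih])

lemma E_iota: "E (\<iota> a) = a" using Eform[of a 0] by simp

lemma xi_norm: "cinner \<xi> \<xi> = 1"
  using omega_vec[of 1] by (simp add: pi_one omega_def E_one state_lin(6)[OF st])

lemma vec_bound: "(norm (\<pi> b \<xi>))\<^sup>2 \<le> 4 * norm (E (adj b * b))"
proof -
  obtain y where y: "E (adj b * b) = adj y * y" using Epos[of b] unfolding positive_def by blast
  have "(norm (\<pi> b \<xi>))\<^sup>2 = Re (cinner (\<pi> b \<xi>) (\<pi> b \<xi>))" by (rule norm_sq_cinner)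
  also have "\<dots> = Re (\<omega>\<^sub>o (adj y * y))" by (simp add: inner_vec omega_def y)
  also have "\<dots> \<le> 4 * (norm y)\<^sup>2" by (rule state_bound[OF st])
  also have "(norm y)\<^sup>2 = norm (E (adj b * b))" by (simp add: y cstar_identity)
  finally show ?thesis .
qed

lemma vec_tendsto:
  assumes p: "p \<longlonglongrightarrow> b"
  shows "(\<lambda>k. \<pi> (p k) \<xi>) \<longlonglongrightarrow> \<pi> b \<xi>"
proof -
  have E0: "E 0 = 0" using clinear_0[OF Ecl] .
  have "(\<lambda>k. adj (p k - b) * (p k - b)) \<longlonglongrightarrow> adj 0 * 0"
  proof (intro tendsto_mult bounded_linear.tendsto[OF bounded_linear_adj])
    show "(\<lambda>k. p k - b) \<longlonglongrightarrow> 0" using p by (simp add: Lim_null[symmetric])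
    thus "(\<lambda>k. p k - b) \<longlonglongrightarrow> 0" .
  qed
  hence t1: "(\<lambda>k. adj (p k - b) * (p k - b)) \<longlonglongrightarrow> 0" by simp
  have "isCont E 0" using Econt by (simp add: continuous_on_eq_continuous_at)
  hence "(\<lambda>k. E (adj (p k - b) * (p k - b))) \<longlonglongrightarrow> E 0" using t1 by (rule isCont_tendsto_compose)
  hence "(\<lambda>k. norm (E (adj (p k - b) * (p k - b)))) \<longlonglongrightarrow> 0" using E0 by (simp add: tendsto_norm_zero)
  hence t2: "(\<lambda>k. 2 * sqrt (norm (E (adj (p k - b) * (p k - b))))) \<longlonglongrightarrow> 2 * sqrt 0"
    by (intro tendsto_intros)
  have "(\<lambda>k. \<pi> (p k) \<xi> - \<pi> b \<xi>) \<longlonglongrightarrow> 0"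
  proof (rule Lim_null_comparison)
    show "\<forall>\<^sub>F k in sequentially. norm (\<pi> (p k) \<xi> - \<pi> b \<xi>) \<le> 2 * sqrt (norm (E (adj (p k - b) * (p k - b))))"
    proof (intro always_eventually allI)
      fix k
      have "(norm (\<pi> (p k - b) \<xi>))\<^sup>2 \<le> (2 * sqrt (norm (E (adj (p k - b) * (p k - b)))))\<^sup>2"
        using vec_bound[of "p k - b"] by (simp add: power_mult_distrib)
      hence "norm (\<pi> (p k - b) \<xi>) \<le> 2 * sqrt (norm (E (adj (p k - b) * (p k - b))))"
        by (rule power2_le_imp_le) simp
      thus "norm (\<pi> (p k) \<xi> - \<pi> b \<xi>) \<le> 2 * sqrt (norm (E (adj (p k - b) * (p k - b))))"
        by (simp add: pi_diff)
    qed
    show "(\<lambda>k. 2 * sqrt (norm (E (adj (p k - b) * (p k - b))))) \<longlonglongrightarrow> 0" using t2 by simp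
  qed
  thus ?thesis by (simp add: Lim_null[symmetric])
qed

lemma orth_dense:
  assumes D: "closure D = UNIV" and o: "\<forall>b\<in>D. cinner (\<pi> b \<xi>) z = 0"
  shows "z = 0"
proof -
  have all: "cinner (\<pi> b \<xi>) z = 0" for b
  proof -
    have "b \<in> closure D" using D by simp
    then obtain q where q: "\<forall>n. q n \<in> D" "q \<longlonglongrightarrow> b" unfolding closure_sequential by blast
    have "(\<lambda>n. cinner (\<pi> (q n) \<xi>) z) \<longlonglongrightarrow> cinner (\<pi> b \<xi>) z"
      by (intro tendsto_cinner vec_tendsto q(2) tendsto_const)
    moreover have "(\<lambda>n. cinner (\<pi> (q n) \<xi>) z) = (\<lambda>n. 0)" using q(1) o by auto
    ultimately show ?thesis using LIMSEQ_unique tendsto_const by metis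
  qed
  have "cinner z z = 0"
    by (rule cinner_closure_left[where f="\<lambda>x. x" and S="range (\<lambda>b. \<pi> b \<xi>)"])
      (use all dens bl_id in auto)
  thus ?thesis by simp
qed

end



context M8 begin

abbreviation "R0 \<equiv> range (\<lambda>a. \<pi> (\<iota> a) \<xi>)"

lemma iota_lin: "\<iota> (a + b) = \<iota> a + \<iota> b" "\<iota> (scaleC c a) = scaleC c (\<iota> a)" "\<iota> (a * b) = \<iota> a * \<iota> b"
  "\<iota> (adj a) = adj (\<iota> a)" "\<iota> 1 = 1" "\<iota> 0 = 0"
  using star_hom_props[OF ih] star_hom_0[OF ih] by auto

lemma csubR0: "csub R0" unfolding csub_def
proof (intro conjI ballI allI)
  show "0 \<in> R0" by (rule range_eqI[of _ _ 0]) (simp add: iota_lin pi_zero)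
next
  fix x y assume "x \<in> R0" "y \<in> R0"
  then obtain a b where "x = \<pi> (\<iota> a) \<xi>" "y = \<pi> (\<iota> b) \<xi>" by blast
  hence "x + y = \<pi> (\<iota> (a + b)) \<xi>" by (simp add: iota_lin pi_add)
  thus "x + y \<in> R0" by blast
next
  fix c x assume "x \<in> R0"
  then obtain a where "x = \<pi> (\<iota> a) \<xi>" by blast
  hence "scaleC c x = \<pi> (\<iota> (scaleC c a)) \<xi>" by (simp add: iota_lin pi_scaleC)
  thus "scaleC c x \<in> R0" by blast
qed

lemma csubK: "csub K" unfolding K_def by (rule csub_closure[OF csubR0])
lemma closedK: "closed K" unfolding K_def by simp
lemma R0K: "\<pi> (\<iota> a) \<xi> \<in> K" unfolding K_def by (rule closure_subset[THEN subsetD]) (rule rangeI)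
lemma xiK: "\<xi> \<in> K" using R0K[of 1] by (simp add: iota_lin pi_one)

lemma W_K: "k \<in> K \<Longrightarrow> W k \<in> K"
  unfolding K_def
  by (rule map_closure[OF Wbl]) (auto simp: Wvec Phi_A intro!: closure_subset[THEN subsetD])

lemma Winv_vec: "inv W (\<pi> (\<iota> b) \<xi>) = \<pi> (\<iota> (inv \<theta> b)) \<xi>"
proof -
  have bt: "bij \<theta>" using aut_theta unfolding star_aut_def by blast
  have "W (\<pi> (\<iota> (inv \<theta> b)) \<xi>) = \<pi> (\<iota> b) \<xi>"
    using bt by (simp add: Wvec Phi_A bij_is_surj surj_f_inv_f)
  hence "inv W (W (\<pi> (\<iota> (inv \<theta> b)) \<xi>)) = inv W (\<pi> (\<iota> b) \<xi>)" by simp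
  thus ?thesis using unitary_inv(2)[OF Wu] by simp
qed

lemma Winv_K: "k \<in> K \<Longrightarrow> inv W k \<in> K"
  unfolding K_def
  by (rule map_closure[OF unitary_inv(4)[OF Wu]]) (auto simp: Winv_vec intro!: closure_subset[THEN subsetD])

lemma piA_K: "k \<in> K \<Longrightarrow> \<pi> (\<iota> a) k \<in> K"
  unfolding K_def
  by (rule map_closure[OF pi_bl]) (auto simp: pi_mult[symmetric] iota_lin(3)[symmetric] intro!: closure_subset[THEN subsetD])

lemma P_W: "orth_proj K (W z) = W (orth_proj K z)"
  by (rule proj_commute[OF csubK closedK Wbl Wcl W_K Winv_K unitary_inv(3)[OF Wu]])

lemma P_pi: "orth_proj K (\<pi> (\<iota> a) z) = \<pi> (\<iota> a) (orth_proj K z)"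
proof (rule proj_commute[where A="\<pi> (\<iota> a)" and A'="\<pi> (\<iota> (adj a))"])
  show "csub K" by (rule csubK)
  show "closed K" by (rule closedK)
  show "bounded_linear (\<pi> (\<iota> a))" by (rule pi_bl)
  show "clinear (\<pi> (\<iota> a))" by (rule pi_cl)
  show "\<And>k. k \<in> K \<Longrightarrow> \<pi> (\<iota> a) k \<in> K" by (rule piA_K)
  show "\<And>k. k \<in> K \<Longrightarrow> \<pi> (\<iota> (adj a)) k \<in> K" by (rule piA_K)
  show "\<And>v w. cinner (\<pi> (\<iota> (adj a)) v) w = cinner v (\<pi> (\<iota> a) w)"
    by (subst iota_lin(4), rule pi_adj)
qed

lemma WPhi: "W (\<pi> b z) = \<pi> (\<Phi> b) (W z)"
proof (rule eq_on_closure[where S="range (\<lambda>c. \<pi> c \<xi>)" and f="\<lambda>z. W (\<pi> b z)" and g="\<lambda>z. \<pi> (\<Phi> b) (W z)"])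
  show "bounded_linear (\<lambda>z. W (\<pi> b z))" by (rule bounded_linear_compose[OF Wbl pi_bl])
  show "bounded_linear (\<lambda>z. \<pi> (\<Phi> b) (W z))" by (rule bounded_linear_compose[OF pi_bl Wbl])
  show "z \<in> closure (range (\<lambda>c. \<pi> c \<xi>))" using dens by simp
  show "\<forall>s\<in>range (\<lambda>c. \<pi> c \<xi>). W (\<pi> b s) = \<pi> (\<Phi> b) (W s)"
    by (auto simp: pi_mult[symmetric] Wvec star_hom_props(1)[OF Phih])
qed

definition cn :: "int \<Rightarrow> 'a" where "cn n = aut_pow \<alpha> (- n) (useq \<alpha> u n)"

lemma Tn: "W (\<pi> (upow V n) z) = \<pi> (upow V n) (\<pi> (\<iota> (cn n)) (W z))"
proof -
  have "W (\<pi> (upow V n) z) = \<pi> (\<iota> (useq \<alpha> u n) * upow V n) (W z)" by (simp add: WPhi Phi_upow)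
  also have "\<iota> (useq \<alpha> u n) * upow V n = upow V n * \<iota> (cn n)"
    by (simp add: upowA cn_def aut_pow_cancel[OF aut_alpha])
  finally show ?thesis by (simp add: pi_mult)
qed

lemma pi_inv: "\<pi> (upow V (- n)) (\<pi> (upow V n) z) = z"
  by (simp add: pi_mult[symmetric] upow_cancel pi_one)

lemma Orth:
  assumes m: "m \<noteq> 0" and k1: "k1 \<in> K" and k2: "k2 \<in> K"
  shows "cinner (\<pi> (upow V m) k1) k2 = 0"
proof -
  have gen: "cinner (\<pi> (upow V m) (\<pi> (\<iota> a) \<xi>)) (\<pi> (\<iota> b) \<xi>) = 0" for a b
  proof -
    have "cinner (\<pi> (upow V m) (\<pi> (\<iota> a) \<xi>)) (\<pi> (\<iota> b) \<xi>) = \<omega> (adj (upow V m * \<iota> a) * \<iota> b)"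
      by (simp add: pi_mult[symmetric] inner_vec)
    also have "adj (upow V m * \<iota> a) * \<iota> b = \<iota> (adj a) * upow V (- m) * \<iota> b"
      by (simp add: adj_mult upow_adj iota_lin)
    finally show ?thesis using m by (simp add: omega_def E_iVi state_lin(3)[OF st])
  qed
  have g2: "cinner (\<pi> (upow V m) (\<pi> (\<iota> a) \<xi>)) k2 = 0" for a
    by (rule cinner_closure_right[where f="\<lambda>x. x" and S=R0]) (use gen k2 K_def bl_id in auto)
  show ?thesis
    by (rule cinner_closure_left[where f="\<pi> (upow V m)" and S=R0]) (use g2 k1 K_def pi_bl in auto)
qed

lemma partA:
  assumes FK: "\<forall>x. W x = x \<longrightarrow> x \<in> K"
  shows "\<forall>n::int. n \<noteq> 0 \<longrightarrow> (\<forall>\<eta>\<in>K. \<pi> (\<iota> (aut_pow \<alpha> (- n) (useq \<alpha> u n))) (W \<eta>) = \<eta> \<longrightarrow> \<eta> = 0)"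
proof (intro allI impI ballI)
  fix n :: int and \<eta> assume n: "n \<noteq> 0" and eK: "\<eta> \<in> K"
    and T: "\<pi> (\<iota> (aut_pow \<alpha> (- n) (useq \<alpha> u n))) (W \<eta>) = \<eta>"
  define x where "x = \<pi> (upow V n) \<eta>"
  have "W x = x" unfolding x_def Tn using T by (simp add: cn_def)
  hence xK: "x \<in> K" using FK by blast
  have "cinner x x = 0" unfolding x_def[of] using Orth[OF n eK] xK x_def by simp
  hence "x = 0" by simp
  hence "\<pi> (upow V (- n)) x = 0" using clinear_0[OF pi_cl] by simp
  thus "\<eta> = 0" unfolding x_def pi_inv .
qed

lemma partB:
  assumes ii: "\<forall>n::int. n \<noteq> 0 \<longrightarrow> (\<forall>\<eta>\<in>K. \<pi> (\<iota> (aut_pow \<alpha> (- n) (useq \<alpha> u n))) (W \<eta>) = \<eta> \<longrightarrow> \<eta> = 0)"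
  shows "\<forall>x. W x = x \<longrightarrow> x \<in> K"
proof (intro allI impI)
  fix x assume Wx: "W x = x"
  define P where "P = orth_proj K"
  have Pp: "P y \<in> K" "\<forall>s\<in>K. cinner s (y - P y) = 0" for y
    using orth_proj_props[OF csubK closedK] unfolding P_def by auto
  have c1: "cinner (\<pi> (upow V n) (\<pi> (\<iota> a) \<xi>)) x = 0" if n: "n \<noteq> 0" for n a
  proof -
    define w where "w = \<pi> (upow V (- n)) x"
    define T where "T y = \<pi> (\<iota> (cn n)) (W y)" for y
    have "x = \<pi> (upow V n) (T w)"
    proof -
      have "\<pi> (upow V n) w = x" unfolding w_def using pi_inv[of "- n" x] by simp
      hence "W (\<pi> (upow V n) w) = x" using Wx by simp
      thus ?thesis unfolding Tn T_def by simp
    qed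
    hence "w = \<pi> (upow V (- n)) (\<pi> (upow V n) (T w))" unfolding w_def by simp
    hence Tw: "T w = w" using pi_inv[of n "T w"] by simp
    have "T (P w) = P (T w)" unfolding T_def P_def by (simp add: P_W P_pi)
    hence "T (P w) = P w" using Tw by simp
    hence "P w = 0" using ii n Pp(1)[of w] unfolding T_def cn_def by blast
    hence "cinner (\<pi> (\<iota> a) \<xi>) w = 0" using Pp(2)[of w] R0K[of a] by (simp add: cinner_diff_right)
    moreover have "cinner (\<pi> (\<iota> a) \<xi>) w = cinner (\<pi> (upow V n) (\<pi> (\<iota> a) \<xi>)) x"
      unfolding w_def pi_adj[symmetric] upow_adj by simp
    ultimately show ?thesis by simp
  qed
  define z where "z = x - P x"
  have c2: "cinner (\<pi> (\<iota> a * upow V n) \<xi>) z = 0" for a n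
  proof -
    define a' where "a' = aut_pow \<alpha> (- n) a"
    have "\<iota> a * upow V n = upow V n * \<iota> a'"
      unfolding a'_def upowA by (simp add: aut_pow_cancel[OF aut_alpha])
    hence e: "\<pi> (\<iota> a * upow V n) \<xi> = \<pi> (upow V n) (\<pi> (\<iota> a') \<xi>)" by (simp add: pi_mult)
    show ?thesis
    proof (cases "n = 0")
      case True
      thus ?thesis unfolding e z_def using Pp(2)[of x] R0K[of a'] by (simp add: pi_one)
    next
      case False
      have "cinner (\<pi> (upow V n) (\<pi> (\<iota> a') \<xi>)) (P x) = 0" by (rule Orth[OF False R0K Pp(1)])
      thus ?thesis unfolding e z_def using c1[OF False] by (simp add: cinner_diff_right)
    qed
  qed
  have "z = 0"
  proof (rule orth_dense[OF D0dense], intro ballI)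
    fix b assume "b \<in> {\<Sum>n\<in>F. \<iota> (f n) * upow V n | F f. finite F}"
    then obtain F f where b: "b = (\<Sum>n\<in>F. \<iota> (f n) * upow V n)" by blast
    show "cinner (\<pi> b \<xi>) z = 0" unfolding b pi_sum cinner_sum_left using c2 by simp
  qed
  hence "x = P x" unfolding z_def by simp
  thus "x \<in> K" using Pp(1)[of x] by simp
qed

lemma part1: "E1_on K W = E1 W \<longleftrightarrow> (\<forall>x. W x = x \<longrightarrow> x \<in> K)"
proof -
  define FW where "FW = {\<eta>. W \<eta> = \<eta>}"
  have csF: "csub FW" unfolding csub_def FW_def using Wcl clinear_0[OF Wcl]
    by (auto simp: clinear_def)
  have clF: "closed FW" unfolding FW_def
    by (intro closed_Collect_eq linear_continuous_on Wbl continuous_on_id)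
  have e1: "{\<eta>\<in>K. W \<eta> = \<eta>} = K \<inter> FW" unfolding FW_def by auto
  have csG: "csub (K \<inter> FW)" using csF csubK unfolding csub_def by auto
  have clG: "closed (K \<inter> FW)" using clF closedK by auto
  show ?thesis
  proof
    assume eq: "E1_on K W = E1 W"
    show "\<forall>x. W x = x \<longrightarrow> x \<in> K"
    proof (intro allI impI)
      fix x assume "W x = x"
      hence "x \<in> FW" unfolding FW_def by simp
      hence "E1 W x = x" unfolding E1_def FW_def[symmetric] using orth_proj_id[OF csF] by simp
      moreover have "E1_on K W x \<in> K \<inter> FW" unfolding E1_on_def e1 using orth_proj_props[OF csG clG] by blast
      ultimately show "x \<in> K" using eq by simp
    qed
  next
    assume "\<forall>x. W x = x \<longrightarrow> x \<in> K"
    hence "{\<eta>\<in>K. W \<eta> = \<eta>} = {\<eta>. W \<eta> = \<eta>}" by auto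
    thus "E1_on K W = E1 W" unfolding E1_on_def E1_def by simp
  qed
qed

end



lemma fixed_in_span:
  fixes W :: "'h::chilbert \<Rightarrow> 'h"
  assumes W: "unitary_op W" and Wx: "W x = x" and xD: "x \<in> closure (range f)"
    and xiD: "\<xi> \<in> closure (range f)"
    and lim: "\<And>b c. (\<lambda>n. cinner (f c) (avg W n (f b))) \<longlonglongrightarrow> cinner (f c) \<xi> * cinner \<xi> (f b)"
  shows "x = scaleC (cinner \<xi> x) \<xi>"
proof -
  have key: "cinner x (f b) = cinner \<xi> (f b) * cinner x \<xi>" for b
  proof -
    define g where "g = scaleC (cinner \<xi> (f b)) \<xi>"
    have "(\<lambda>n. cinner x (avg W n (f b))) \<longlonglongrightarrow> cinner x g"
    proof (rule weak_limit_closure[where D="range f" and C="norm (f b)"])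
      show "\<And>n. norm (avg W n (f b)) \<le> norm (f b)" by (rule avg_norm[OF W])
      show "x \<in> closure (range f)" by (rule xD)
      fix v assume "v \<in> range f"
      then obtain c where v: "v = f c" by blast
      show "(\<lambda>n. cinner v (avg W n (f b))) \<longlonglongrightarrow> cinner v g"
        unfolding v g_def cinner_scaleC_right using lim[of c b] by (simp add: mult.commute)
    qed
    moreover have "\<forall>\<^sub>F n in sequentially. cinner x (f b) = cinner x (avg W n (f b))"
      by (rule eventually_sequentiallyI[of 1]) (simp add: cinner_avg_fixed[OF W Wx])
    hence "(\<lambda>n. cinner x (avg W n (f b))) \<longlonglongrightarrow> cinner x (f b)"
      by (rule Lim_transform_eventually[OF tendsto_const])
    ultimately have "cinner x (f b) = cinner x g" using LIMSEQ_unique by blast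
    thus ?thesis unfolding g_def cinner_scaleC_right .
  qed
  define z where "z = x - scaleC (cinner \<xi> x) \<xi>"
  have zf: "\<forall>s\<in>range f. cinner z (id s) = 0"
  proof
    fix s assume "s \<in> range f"
    then obtain b where s: "s = f b" by blast
    have "cinner z (f b) = cinner x (f b) - cnj (cinner \<xi> x) * cinner \<xi> (f b)"
      unfolding z_def by (simp add: cinner_diff_left cinner_scaleC_left)
    also have "cnj (cinner \<xi> x) = cinner x \<xi>" by (rule cinner_commute[symmetric])
    finally show "cinner z (id s) = 0" unfolding s key by simp
  qed
  have bid: "bounded_linear id" by (simp add: id_def bounded_linear_ident)
  have z1: "cinner z (id x) = 0" by (rule cinner_closure_right[OF zf bid xD])
  have z2: "cinner z (id \<xi>) = 0" by (rule cinner_closure_right[OF zf bid xiD])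
  have "cinner z z = 0" unfolding z_def[of] using z1 z2 z_def
    by (simp add: cinner_diff_right cinner_scaleC_right)
  hence "z = 0" by simp
  thus ?thesis unfolding z_def by simp
qed

lemma span_implies_lim:
  fixes W :: "'h::chilbert \<Rightarrow> 'h"
  assumes W: "unitary_op W" and Wxi: "W \<xi> = \<xi>"
    and span: "\<forall>x. W x = x \<longrightarrow> x = scaleC (cinner \<xi> x) \<xi>"
  shows "(\<lambda>n. cinner v (avg W n y)) \<longlonglongrightarrow> cinner v \<xi> * cinner \<xi> y"
proof -
  obtain f where f: "W f = f" "(\<lambda>n. avg W n y) \<longlonglongrightarrow> f" using mean_ergodic[OF W] by blast
  have "(\<lambda>n. cinner \<xi> (avg W n y)) \<longlonglongrightarrow> cinner \<xi> f" by (intro tendsto_cinner tendsto_const f(2))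
  moreover have "\<forall>\<^sub>F n in sequentially. cinner \<xi> y = cinner \<xi> (avg W n y)"
    by (rule eventually_sequentiallyI[of 1]) (simp add: cinner_avg_fixed[OF W Wxi])
  hence "(\<lambda>n. cinner \<xi> (avg W n y)) \<longlonglongrightarrow> cinner \<xi> y"
    by (rule Lim_transform_eventually[OF tendsto_const])
  ultimately have e: "cinner \<xi> f = cinner \<xi> y" using LIMSEQ_unique by blast
  have "(\<lambda>n. cinner v (avg W n y)) \<longlonglongrightarrow> cinner v f" by (intro tendsto_cinner tendsto_const f(2))
  moreover have "cinner v f = cinner v \<xi> * cinner \<xi> y"
    using span f(1) e by (metis cinner_scaleC_right mult.commute)
  ultimately show ?thesis by simp
qed

context M8 begin

lemma Wpow_vec: "(W ^^ k) (\<pi> b \<xi>) = \<pi> ((\<Phi> ^^ k) b) \<xi>"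
  by (induction k) (simp_all add: Wvec)

lemma cesaro_vec:
  "(\<Sum>k<n. \<omega> (a * (\<Phi> ^^ k) b)) / of_nat n = cinner (\<pi> (adj a) \<xi>) (avg W n (\<pi> b \<xi>))"
proof -
  have "cinner (\<pi> (adj a) \<xi>) (avg W n (\<pi> b \<xi>)) = of_real (1 / real n) * (\<Sum>k<n. \<omega> (a * (\<Phi> ^^ k) b))"
    unfolding avg_def cinner_scaleR_right cinner_sum_right Wpow_vec inner_vec by (simp add: adj_adj)
  thus ?thesis by (simp add: divide_inverse mult.commute)
qed

lemma cesaro_o:
  "(\<Sum>k<n. \<omega>\<^sub>o (a * (\<theta> ^^ k) b)) / of_nat n = cinner (\<pi> (\<iota> (adj a)) \<xi>) (avg W n (\<pi> (\<iota> b) \<xi>))"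
proof -
  have "\<omega>\<^sub>o (a * (\<theta> ^^ k) b) = \<omega> (\<iota> a * (\<Phi> ^^ k) (\<iota> b))" for k
    by (simp add: omega_def Phi_pow_A iota_lin(3)[symmetric] E_iota)
  hence "(\<Sum>k<n. \<omega>\<^sub>o (a * (\<theta> ^^ k) b)) = (\<Sum>k<n. \<omega> (\<iota> a * (\<Phi> ^^ k) (\<iota> b)))" by simp
  thus ?thesis using cesaro_vec[where n=n and a="\<iota> a" and b="\<iota> b"] by (simp add: iota_lin(4))
qed

lemma omega_adj_vec: "\<omega> a = cinner (\<pi> (adj a) \<xi>) \<xi>"
  using inner_vec_xi[of "adj a"] by (simp add: adj_adj)

lemma xi_vec: "\<xi> = \<pi> 1 \<xi>" by (simp add: pi_one)

lemma WC_iff: "weakly_clustering \<omega> \<Phi> \<longleftrightarrow> (\<forall>x. W x = x \<longrightarrow> x = scaleC (cinner \<xi> x) \<xi>)"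
proof
  assume wc: "weakly_clustering \<omega> \<Phi>"
  show "\<forall>x. W x = x \<longrightarrow> x = scaleC (cinner \<xi> x) \<xi>"
  proof (intro allI impI)
    fix x assume Wx: "W x = x"
    show "x = scaleC (cinner \<xi> x) \<xi>"
    proof (rule fixed_in_span[OF Wu Wx, where f="\<lambda>b. \<pi> b \<xi>"])
      show "x \<in> closure (range (\<lambda>b. \<pi> b \<xi>))" using dens by simp
      show "\<xi> \<in> closure (range (\<lambda>b. \<pi> b \<xi>))" using dens by simp
      fix b c
      have "(\<lambda>n. (\<Sum>k<n. \<omega> (adj c * (\<Phi> ^^ k) b)) / of_nat n) \<longlonglongrightarrow> \<omega> (adj c) * \<omega> b"
        using wc unfolding weakly_clustering_def by blast
      thus "(\<lambda>n. cinner (\<pi> c \<xi>) (avg W n (\<pi> b \<xi>))) \<longlonglongrightarrow> cinner (\<pi> c \<xi>) \<xi> * cinner \<xi> (\<pi> b \<xi>)"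
        unfolding cesaro_vec inner_vec_xi omega_vec[of b] by (simp add: adj_adj)
    qed
  qed
next
  assume span: "\<forall>x. W x = x \<longrightarrow> x = scaleC (cinner \<xi> x) \<xi>"
  show "weakly_clustering \<omega> \<Phi>" unfolding weakly_clustering_def
  proof (intro allI)
    fix a b
    show "(\<lambda>n. (\<Sum>k<n. \<omega> (a * (\<Phi> ^^ k) b)) / of_nat n) \<longlonglongrightarrow> \<omega> a * \<omega> b"
      unfolding cesaro_vec omega_adj_vec[of a] omega_vec[of b]
      by (rule span_implies_lim[OF Wu Wxi span])
  qed
qed

lemma WCo_span:
  assumes wc: "weakly_clustering \<omega>\<^sub>o \<theta>"
  shows "\<forall>x. W x = x \<and> x \<in> K \<longrightarrow> x = scaleC (cinner \<xi> x) \<xi>"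
proof (intro allI impI)
  fix x assume x: "W x = x \<and> x \<in> K"
  show "x = scaleC (cinner \<xi> x) \<xi>"
  proof (rule fixed_in_span[OF Wu conjunct1[OF x], where f="\<lambda>a. \<pi> (\<iota> a) \<xi>"])
    show "x \<in> closure R0" using x K_def by simp
    show "\<xi> \<in> closure R0" using xiK K_def by simp
    fix b c
    have "(\<lambda>n. (\<Sum>k<n. \<omega>\<^sub>o (adj c * (\<theta> ^^ k) b)) / of_nat n) \<longlonglongrightarrow> \<omega>\<^sub>o (adj c) * \<omega>\<^sub>o b"
      using wc unfolding weakly_clustering_def by blast
    moreover have "cinner (\<pi> (\<iota> c) \<xi>) \<xi> = \<omega>\<^sub>o (adj c)"
      by (simp add: inner_vec_xi omega_def iota_lin(4)[symmetric] E_iota)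
    moreover have "cinner \<xi> (\<pi> (\<iota> b) \<xi>) = \<omega>\<^sub>o b" by (simp add: omega_vec[symmetric] omega_def E_iota)
    ultimately show "(\<lambda>n. cinner (\<pi> (\<iota> c) \<xi>) (avg W n (\<pi> (\<iota> b) \<xi>))) \<longlonglongrightarrow>
        cinner (\<pi> (\<iota> c) \<xi>) \<xi> * cinner \<xi> (\<pi> (\<iota> b) \<xi>)"
      unfolding cesaro_o by (simp add: adj_adj)
  qed
qed

lemma main:
  "(E1_on K W = E1 W \<longleftrightarrow>
            (\<forall>n::int. n \<noteq> 0 \<longrightarrow>
               (\<forall>\<eta>\<in>K. \<pi> (\<iota> (aut_pow \<alpha> (- n) (useq \<alpha> u n))) (W \<eta>) = \<eta> \<longrightarrow> \<eta> = 0)))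
       \<and> (weakly_clustering \<omega>\<^sub>o \<theta> \<longrightarrow>
            (weakly_clustering \<omega> \<Phi> \<longleftrightarrow>
              (\<forall>n::int. n \<noteq> 0 \<longrightarrow>
                 (\<forall>\<eta>\<in>K. \<pi> (\<iota> (aut_pow \<alpha> (- n) (useq \<alpha> u n))) (W \<eta>) = \<eta> \<longrightarrow> \<eta> = 0))))"
  (is "(?A \<longleftrightarrow> ?ii) \<and> (?wco \<longrightarrow> (?wc \<longleftrightarrow> ?ii))")
proof -
  have FK: "(\<forall>x. W x = x \<longrightarrow> x \<in> K) \<longleftrightarrow> ?ii" using partA partB by blast
  have p1: "?A \<longleftrightarrow> ?ii" using part1 FK by blast
  have p2: "?wc \<longleftrightarrow> ?ii" if wco: ?wco
  proof -
    have "?wc \<longleftrightarrow> (\<forall>x. W x = x \<longrightarrow> x = scaleC (cinner \<xi> x) \<xi>)" by (rule WC_iff)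
    also have "\<dots> \<longleftrightarrow> (\<forall>x. W x = x \<longrightarrow> x \<in> K)"
    proof
      assume s: "\<forall>x. W x = x \<longrightarrow> x = scaleC (cinner \<xi> x) \<xi>"
      show "\<forall>x. W x = x \<longrightarrow> x \<in> K"
      proof (intro allI impI)
        fix x assume "W x = x"
        hence "x = scaleC (cinner \<xi> x) \<xi>" using s by blast
        moreover have "scaleC (cinner \<xi> x) \<xi> \<in> K" using csubK xiK unfolding csub_def by blast
        ultimately show "x \<in> K" by simp
      qed
    next
      assume "\<forall>x. W x = x \<longrightarrow> x \<in> K"
      thus "\<forall>x. W x = x \<longrightarrow> x = scaleC (cinner \<xi> x) \<xi>" using WCo_span[OF wco] by blast
    qed
    finally show ?thesis using FK by blast
  qed
  show ?thesis using p1 p2 by blast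
qed

end



theorem mainTheorem8:
  fixes \<theta> \<alpha> :: "'a::cstar_algebra \<Rightarrow> 'a" and u :: 'a
    and \<iota> :: "'a \<Rightarrow> 'b::cstar_algebra" and V :: 'b and E :: "'b \<Rightarrow> 'a"
    and \<Phi> :: "'b \<Rightarrow> 'b"
    and \<omega>\<^sub>o :: "'a \<Rightarrow> complex" and \<omega> :: "'b \<Rightarrow> complex"
    and \<pi> :: "'b \<Rightarrow> 'h::chilbert \<Rightarrow> 'h" and W :: "'h \<Rightarrow> 'h" and \<xi> :: 'h
    and K :: "'h set"
  assumes aut_theta: "star_aut \<theta>" and aut_alpha: "star_aut \<alpha>"
    and cp: "crossed_product \<alpha> \<iota> V E"
    and unit_u: "unitary u"
    and comm: "\<And>a. u * \<alpha> (\<theta> a) = \<theta> (\<alpha> a) * u"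
    and Phi_aut: "star_aut \<Phi>"
    and Phi_A: "\<And>a. \<Phi> (\<iota> a) = \<iota> (\<theta> a)"
    and Phi_V: "\<Phi> V = \<iota> u * V"
    and omega_o: "invariant_state \<omega>\<^sub>o \<theta>"
    and omega_def: "\<omega> = (\<lambda>b. \<omega>\<^sub>o (E b))"
    and GNS: "covariant_GNS \<omega> \<Phi> \<pi> W \<xi>"
    and K_def: "K = closure (range (\<lambda>a. \<pi> (\<iota> a) \<xi>))"
  shows "(E1_on K W = E1 W \<longleftrightarrow>
            (\<forall>n::int. n \<noteq> 0 \<longrightarrow>
               (\<forall>\<eta>\<in>K. \<pi> (\<iota> (aut_pow \<alpha> (- n) (useq \<alpha> u n))) (W \<eta>) = \<eta> \<longrightarrow> \<eta> = 0)))
       \<and> (weakly_clustering \<omega>\<^sub>o \<theta> \<longrightarrow>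
            (weakly_clustering \<omega> \<Phi> \<longleftrightarrow>
              (\<forall>n::int. n \<noteq> 0 \<longrightarrow>
                 (\<forall>\<eta>\<in>K. \<pi> (\<iota> (aut_pow \<alpha> (- n) (useq \<alpha> u n))) (W \<eta>) = \<eta> \<longrightarrow> \<eta> = 0))))"
  proof -
  interpret M8 \<theta> \<alpha> u \<iota> V E \<Phi> \<omega>\<^sub>o \<omega> \<pi> W \<xi> K
    by (intro M8.intro) (rule assms)+
  show ?thesis by (rule main)
qed

end
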